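(* The classes PosLimAvg and AsLimAvg are not closed under complement: there is an automaton $A$ in PosLimAvg such that no automaton $B$ in PosLimAvg satisfies $L_B=1-L_A$, and there is an automaton $A'$ in AsLimAvg such that no automaton $B'$ in AsLimAvg satisfies $L_{B'}=1-L_{A'}$.
   Context: A probabilistic weighted automaton over a finite alphabet $\Sigma$ is a tuple $A=(Q,\rho_I,\Sigma,\delta,\gamma)$ where $Q$ is a finite set of states, $\rho_I$ is a probability distribution on $Q$, $\delta:Q\times\Sigma\to\mathcal D(Q)$ assigns to each state and letter a probability distribution on $Q$, and $\gamma:Q\times\Sigma\times Q\to\mathbb Q$ is a weight function. A run over an infinite word $w=\sigma_1\sigma_2\dots$ is a sequence $r=q_0\sigma_1q_1\sigma_2\dots$ with $\rho_I(q_0)>0$ and $\delta(q_i,\sigma_{i+1})(q_{i+1})>0$ for all $i$; its weight sequence is $\gamma(r)=v_0v_1\dots$ with $v_i=\gamma(q_i,\sigma_{i+1},q_{i+1})$. For each $w$, the probabilities of finite run prefixes induce a probability measure $\mathbb P^A$ on runs over $w$. With $\mathsf{LimAvg}(v)=\liminf_n\frac1n\sum_{i<n}v_i$, PosLimAvg automata define $L^{>0}_A(w)=\sup\{\eta\mid \mathbb P^A(\{r:\mathsf{LimAvg}(\gamma(r))\ge\eta\})>0\}$ and AsLimAvg automata define $L^{=1}_A(w)=\sup\{\eta\mid \mathbb P^A(\{r:\mathsf{LimAvg}(\gamma(r))\ge\eta\})=1\}$. The complement of a quantitative language $L$ is $1-L$. *)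

theory Defs
  imports "HOL-Probability.Probability"
begin

record 'a pwa =
  pstates :: "nat set"
  pinit   :: "nat pmf"
  ptrans  :: "nat \<Rightarrow> 'a \<Rightarrow> nat pmf"
  pweight :: "nat \<Rightarrow> 'a \<Rightarrow> nat \<Rightarrow> rat"

definition wf_pwa :: "'a set \<Rightarrow> 'a pwa \<Rightarrow> bool" where
  "wf_pwa \<Sigma> A \<longleftrightarrow> finite (pstates A) \<and> set_pmf (pinit A) \<subseteq> pstates A \<and>
     (\<forall>q\<in>pstates A. \<forall>\<sigma>\<in>\<Sigma>. set_pmf (ptrans A q \<sigma>) \<subseteq> pstates A)"

text \<open>Infinite words over \<Sigma>: w i is the letter sigma_(i+1).\<close>
definition words :: "'a set \<Rightarrow> (nat \<Rightarrow> 'a) set" where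
  "words \<Sigma> = {w. \<forall>i. w i \<in> \<Sigma>}"

abbreviation seq_space :: "(nat \<Rightarrow> nat) measure" where
  "seq_space \<equiv> PiM UNIV (\<lambda>_. count_space UNIV)"

definition cyl :: "nat \<Rightarrow> (nat \<Rightarrow> nat) \<Rightarrow> (nat \<Rightarrow> nat) set" where
  "cyl n q = {r \<in> space seq_space. \<forall>i\<le>n. r i = q i}"

definition prefix_prob :: "'a pwa \<Rightarrow> (nat \<Rightarrow> 'a) \<Rightarrow> nat \<Rightarrow> (nat \<Rightarrow> nat) \<Rightarrow> real" where
  "prefix_prob A w n q = pmf (pinit A) (q 0) * (\<Prod>i<n. pmf (ptrans A (q i) (w i)) (q (Suc i)))"

definition run_measure :: "'a pwa \<Rightarrow> (nat \<Rightarrow> 'a) \<Rightarrow> (nat \<Rightarrow> nat) measure" where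
  "run_measure A w = (THE M. sets M = sets seq_space \<and> prob_space M \<and>
      (\<forall>n q. measure M (cyl n q) = prefix_prob A w n q))"

definition weight_seq :: "'a pwa \<Rightarrow> (nat \<Rightarrow> 'a) \<Rightarrow> (nat \<Rightarrow> nat) \<Rightarrow> nat \<Rightarrow> real" where
  "weight_seq A w r i = real_of_rat (pweight A (r i) (w i) (r (Suc i)))"

definition LimAvg :: "(nat \<Rightarrow> real) \<Rightarrow> ereal" where
  "LimAvg v = liminf (\<lambda>n. ereal ((\<Sum>i<n. v i) / real n))"

definition L_pos :: "'a pwa \<Rightarrow> (nat \<Rightarrow> 'a) \<Rightarrow> ereal" where
  "L_pos A w = Sup (ereal ` {\<eta>::real.
     measure (run_measure A w) {r \<in> space (run_measure A w). LimAvg (weight_seq A w r) \<ge> ereal \<eta>} > 0})"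

definition L_as :: "'a pwa \<Rightarrow> (nat \<Rightarrow> 'a) \<Rightarrow> ereal" where
  "L_as A w = Sup (ereal ` {\<eta>::real.
     measure (run_measure A w) {r \<in> space (run_measure A w). LimAvg (weight_seq A w r) \<ge> ereal \<eta>} = 1})"

end

theory Submission
  imports Defs
begin


lemma space_seq[simp]: "space seq_space = UNIV"
  by (simp add: space_PiM)

lemma cyl_alt: "cyl n q = {r. \<forall>i\<le>n. r i = q i}"
  by (simp add: cyl_def)

lemma cyl_sets[measurable]: "cyl n q \<in> sets seq_space"
proof -
  have "cyl n q = (\<Inter>i\<in>{..n}. {r \<in> space seq_space. r i = q i})"
    by (auto simp: cyl_alt)
  also have "\<dots> \<in> sets seq_space"
    by (intro sets.finite_INT) measurable
  finally show ?thesis .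
qed

definition Kp :: "'a pwa \<Rightarrow> (nat \<Rightarrow> 'a) \<Rightarrow> nat \<times> nat \<Rightarrow> nat measure" where
  "Kp B w j = measure_pmf (if fst j = 0 then pinit B else ptrans B (snd j) (w (fst j - 1)))"

primrec runf :: "(nat \<times> nat \<Rightarrow> nat) \<Rightarrow> nat \<Rightarrow> nat" where
  "runf x 0 = x (0,0)"
| "runf x (Suc n) = x (Suc n, runf x n)"

lemma space_Kp[simp]: "space (Kp B w j) = UNIV"
  by (simp add: Kp_def)

lemma sets_Kp: "sets (Kp B w j) = sets (count_space UNIV)"
  by (simp add: Kp_def)

lemma space_Om[simp]: "space (PiM UNIV (Kp B w)) = UNIV"
  by (simp add: space_PiM)

lemma runf_meas_i: "(\<lambda>x. runf x n) \<in> measurable (PiM UNIV (Kp B w)) (count_space UNIV)"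
proof (induction n)
  case 0
  have "(\<lambda>x. x (0,0)) \<in> measurable (PiM UNIV (Kp B w)) (Kp B w (0,0))"
    by (rule measurable_component_singleton) auto
  then show ?case by (simp add: measurable_cong_sets[OF refl sets_Kp])
next
  case (Suc n)
  have c: "(\<lambda>x. x (Suc n, i)) \<in> measurable (PiM UNIV (Kp B w)) (count_space UNIV)" for i
  proof -
    have "(\<lambda>x. x (Suc n, i)) \<in> measurable (PiM UNIV (Kp B w)) (Kp B w (Suc n, i))"
      by (rule measurable_component_singleton) auto
    then show ?thesis
      by (simp add: measurable_cong_sets[OF refl sets_Kp])
  qed
  have "(\<lambda>x. (\<lambda>i x. x (Suc n, i)) (runf x n) x) \<in> measurable (PiM UNIV (Kp B w)) (count_space UNIV)"
    by (rule measurable_compose_countable'[where I=UNIV, OF c Suc]) auto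
  then show ?case by simp
qed

lemma runf_meas: "runf \<in> measurable (PiM UNIV (Kp B w)) seq_space"
  by (rule measurable_PiM_single') (auto simp: runf_meas_i)

lemma runf_cyl:
  "runf -` cyl n q = {x. \<forall>j \<in> insert (0,0) ((\<lambda>i. (Suc i, q i)) ` {..<n}). x j \<in> {q (fst j)}}"
proof -
  have "(\<forall>i\<le>n. runf x i = q i) \<longleftrightarrow> (x (0,0) = q 0 \<and> (\<forall>i<n. x (Suc i, q i) = q (Suc i)))" for x
  proof (induction n)
    case 0 then show ?case by simp
  next
    case (Suc n)
    have "(\<forall>i\<le>Suc n. runf x i = q i) \<longleftrightarrow> (\<forall>i\<le>n. runf x i = q i) \<and> runf x (Suc n) = q (Suc n)"
      by (auto simp: le_Suc_eq)
    also have "\<dots> \<longleftrightarrow> (x (0,0) = q 0 \<and> (\<forall>i<n. x (Suc i, q i) = q (Suc i))) \<and> x (Suc n, q n) = q (Suc n)"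
      using Suc by auto
    also have "\<dots> \<longleftrightarrow> (x (0,0) = q 0 \<and> (\<forall>i<Suc n. x (Suc i, q i) = q (Suc i)))"
      by (auto simp: less_Suc_eq)
    finally show ?case .
  qed
  then show ?thesis by (auto simp: cyl_alt)
qed

lemma exists_run_measure:
  "\<exists>M. sets M = sets seq_space \<and> prob_space M \<and> (\<forall>n q. measure M (cyl n q) = prefix_prob B w n q)"
proof -
  interpret P: product_prob_space "Kp B w" UNIV
    by unfold_locales (auto simp: Kp_def measure_pmf.emeasure_space_1 intro!: exI[of _ "{UNIV}"])
  let ?O = "PiM UNIV (Kp B w)"
  let ?M = "distr ?O seq_space runf"
  have "prob_space ?M"
    by (rule P.prob_space_distr) (rule runf_meas)
  moreover have "measure ?M (cyl n q) = prefix_prob B w n q" for n q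
  proof -
    define J where "J = insert (0::nat,0::nat) ((\<lambda>i. (Suc i, q i)) ` {..<n})"
    have fin: "finite J" by (simp add: J_def)
    have "measure ?M (cyl n q) = measure ?O (runf -` cyl n q \<inter> space ?O)"
      by (rule measure_distr) (auto intro: runf_meas)
    also have "runf -` cyl n q \<inter> space ?O = prod_emb UNIV (Kp B w) J (PiE J (\<lambda>j. {q (fst j)}))"
      unfolding runf_cyl J_def[symmetric]
      by (auto simp: prod_emb_def PiE_def Pi_def extensional_def space_PiM)
    also have "measure ?O \<dots> = (\<Prod>j\<in>J. measure (Kp B w j) {q (fst j)})"
      using fin by (intro P.measure_PiM_emb) (auto simp: sets_Kp)
    also have "\<dots> = prefix_prob B w n q"
    proof -
      have inj: "inj_on (\<lambda>i. (Suc i, q i)) {..<n}" by (auto simp: inj_on_def)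
      have nin: "(0,0) \<notin> (\<lambda>i. (Suc i, q i)) ` {..<n}" by auto
      show ?thesis
        unfolding J_def prefix_prob_def
        by (simp add: prod.insert[OF _ nin] prod.reindex[OF inj] Kp_def measure_pmf_single)
    qed
    finally show ?thesis .
  qed
  ultimately show ?thesis by (intro exI[of _ ?M]) simp
qed

definition cylE :: "(nat \<Rightarrow> nat) set set" where
  "cylE = insert {} (range (\<lambda>(n,q). cyl n q))"

lemma cyl_Int: "cyl n q \<inter> cyl m p \<in> cylE"
proof (cases "\<forall>i\<le>min n m. q i = p i")
  case True
  have "cyl n q \<inter> cyl m p = cyl (max n m) (\<lambda>i. if i \<le> n then q i else p i)"
  proof (intro set_eqI iffI)
    fix x assume "x \<in> cyl n q \<inter> cyl m p"
    then show "x \<in> cyl (max n m) (\<lambda>i. if i \<le> n then q i else p i)"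
      by (auto simp: cyl_alt)
  next
    fix x assume x: "x \<in> cyl (max n m) (\<lambda>i. if i \<le> n then q i else p i)"
    have "x i = q i" if "i \<le> n" for i using x that by (auto simp: cyl_alt)
    moreover have "x i = p i" if "i \<le> m" for i
    proof (cases "i \<le> n")
      case True then show ?thesis using x that \<open>\<forall>i\<le>min n m. q i = p i\<close> by (auto simp: cyl_alt)
    next
      case False then show ?thesis using x that by (auto simp: cyl_alt)
    qed
    ultimately show "x \<in> cyl n q \<inter> cyl m p" by (auto simp: cyl_alt)
  qed
  then show ?thesis by (auto simp: cylE_def)
next
  case False
  then have "cyl n q \<inter> cyl m p = {}" by (auto simp: cyl_alt)
  then show ?thesis by (auto simp: cylE_def)
qed

lemma Int_stable_cylE: "Int_stable cylE"
  proof -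
  have "a \<inter> b \<in> cylE" if ab: "a \<in> cylE" "b \<in> cylE" for a b
  proof -
    consider "a = {}" | "b = {}" | n q m p where "a = cyl n q" "b = cyl m p"
      using ab unfolding cylE_def by fastforce
    then show ?thesis
    proof cases
      case 3 then show ?thesis using cyl_Int by simp
    qed (auto simp: cylE_def)
  qed
  then show ?thesis unfolding Int_stable_def by blast
qed

lemma sets_seq_cylE: "sets seq_space = sigma_sets UNIV cylE"
proof
  have sa: "sigma_algebra UNIV (sigma_sets UNIV cylE)"
    by (rule sigma_algebra_sigma_sets) auto
  have "{f. f i \<in> A} \<in> sigma_sets UNIV cylE" for i and A :: "nat set"
  proof -
    let ?X = "(\<lambda>xs. cyl i (\<lambda>j. xs ! j)) ` {xs :: nat list. length xs = Suc i \<and> xs ! i \<in> A}"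
    have eq: "{f. f i \<in> A} = \<Union> ?X"
    proof safe
      fix f :: "nat \<Rightarrow> nat" assume "f i \<in> A"
      show "f \<in> \<Union> ?X"
      proof (rule UN_I[of "map f [0..<Suc i]"])
        show "map f [0..<Suc i] \<in> {xs. length xs = Suc i \<and> xs ! i \<in> A}"
          using \<open>f i \<in> A\<close> by (simp del: upt_Suc)
        show "f \<in> cyl i ((!) (map f [0..<Suc i]))"
          by (auto simp: cyl_alt simp del: upt_Suc)
      qed
    qed (auto simp: cyl_alt)
    have "\<Union> ?X \<in> sigma_sets UNIV cylE"
      by (rule sigma_algebra.countable_Union[OF sa]) (auto simp: cylE_def)
    then show ?thesis using eq by simp
  qed
  moreover have UE: "(UNIV \<rightarrow>\<^sub>E space (count_space UNIV)) = (UNIV :: (nat\<Rightarrow>nat) set)"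
    by (auto simp: PiE_def extensional_def)
  ultimately show "sets seq_space \<subseteq> sigma_sets UNIV cylE"
    unfolding sets_PiM_single UE by (intro sigma_algebra.sigma_sets_subset[OF sa]) auto
next
  show "sigma_sets UNIV cylE \<subseteq> sets seq_space"
  proof -
    have "cylE \<subseteq> sets seq_space" by (auto simp: cylE_def)
    from sets.sigma_sets_subset[OF this] show ?thesis by simp
  qed
qed

lemma run_measure_unique:
  assumes M: "sets M = sets seq_space" "prob_space M" "\<And>n q. measure M (cyl n q) = prefix_prob B w n q"
  and N: "sets N = sets seq_space" "prob_space N" "\<And>n q. measure N (cyl n q) = prefix_prob B w n q"
  shows "M = N"
proof -
  interpret m: prob_space M by fact
  interpret n: prob_space N by fact
  have eq: "emeasure M X = emeasure N X" if "X \<in> cylE" for X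
    using that by (auto simp: cylE_def m.emeasure_eq_measure n.emeasure_eq_measure M(3) N(3))
  have sM: "sets M = sigma_sets UNIV cylE" using M(1) sets_seq_cylE by simp
  have sN: "sets N = sigma_sets UNIV cylE" using N(1) sets_seq_cylE by simp
  have r: "range (\<lambda>i. cyl 0 (\<lambda>_. i)) \<subseteq> cylE" by (auto simp: cylE_def)
  have u: "(\<Union>i. cyl 0 (\<lambda>_. i)) = UNIV" by (auto simp: cyl_alt)
  show ?thesis
    by (rule measure_eqI_generator_eq[OF Int_stable_cylE _ eq sM sN r u]) auto
qed

lemma run_measure_props:
  "sets (run_measure B w) = sets seq_space \<and> prob_space (run_measure B w) \<and>
   (\<forall>n q. measure (run_measure B w) (cyl n q) = prefix_prob B w n q)"
proof -
  let ?P = "\<lambda>M. sets M = sets seq_space \<and> prob_space M \<and> (\<forall>n q. measure M (cyl n q) = prefix_prob B w n q)"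
  obtain M where M: "?P M" using exists_run_measure by blast
  have "\<exists>!M. ?P M"
  proof (rule ex1I[of _ M])
    show "?P M" by fact
    fix N assume "?P N"
    then show "N = M" using M run_measure_unique[of N B w M] by blast
  qed
  then show ?thesis unfolding run_measure_def by (rule theI')
qed

lemma RM_sets[measurable_cong, simp]: "sets (run_measure B w) = sets seq_space"
  using run_measure_props by blast

lemma RM_space[simp]: "space (run_measure B w) = UNIV"
  using sets_eq_imp_space_eq[OF RM_sets] by simp

lemma RM_prob: "prob_space (run_measure B w)"
  using run_measure_props by blast

lemma RM_cyl: "measure (run_measure B w) (cyl n q) = prefix_prob B w n q"
  using run_measure_props by blast


primrec rpath :: "'a pwa \<Rightarrow> (nat \<Rightarrow> 'a) \<Rightarrow> nat \<Rightarrow> nat list pmf" where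
  "rpath B w 0 = map_pmf (\<lambda>q. [q]) (pinit B)"
| "rpath B w (Suc n) = rpath B w n \<bind> (\<lambda>xs. map_pmf (\<lambda>q. xs @ [q]) (ptrans B (last xs) (w n)))"

lemma path_support:
  "xs \<in> set_pmf (rpath B w n) \<Longrightarrow> length xs = Suc n \<and> xs ! 0 \<in> set_pmf (pinit B) \<and>
     (\<forall>i<n. xs ! Suc i \<in> set_pmf (ptrans B (xs ! i) (w i)))"
proof (induction n arbitrary: xs)
  case 0 then show ?case by auto
next
  case (Suc n)
  from Suc.prems obtain ys q where ys: "ys \<in> set_pmf (rpath B w n)" and xs: "xs = ys @ [q]"
    and q: "q \<in> set_pmf (ptrans B (last ys) (w n))" by auto
  from Suc.IH[OF ys] have IH: "length ys = Suc n" "ys ! 0 \<in> set_pmf (pinit B)"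
    "\<forall>i<n. ys ! Suc i \<in> set_pmf (ptrans B (ys ! i) (w i))" by auto
  have last: "last ys = ys ! n" using IH(1) by (subst last_conv_nth) auto
  show ?case
  proof (intro conjI allI impI)
    show "length xs = Suc (Suc n)" using xs IH by simp
    show "xs ! 0 \<in> set_pmf (pinit B)" using xs IH by (simp add: nth_append)
    fix i assume "i < Suc n"
    then consider "i < n" | "i = n" by linarith
    then show "xs ! Suc i \<in> set_pmf (ptrans B (xs ! i) (w i))"
    proof cases
      case 1 then show ?thesis using xs IH by (simp add: nth_append)
    next
      case 2 then show ?thesis using xs IH q last by (simp add: nth_append)
    qed
  qed
qed

lemma prefix_prob_cong:
  "(\<And>i. i \<le> n \<Longrightarrow> q i = q' i) \<Longrightarrow> prefix_prob B w n q = prefix_prob B w n q'"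
  unfolding prefix_prob_def by (intro arg_cong2[where f="(*)"] prod.cong) auto

lemma prefix_prob_Suc:
  "prefix_prob B w (Suc n) q = prefix_prob B w n q * pmf (ptrans B (q n) (w n)) (q (Suc n))"
  unfolding prefix_prob_def by simp

lemma path_pmf:
  "pmf (rpath B w n) xs = (if length xs = Suc n then prefix_prob B w n (\<lambda>i. xs ! i) else 0)"
proof (induction n arbitrary: xs)
  case 0
  show ?case
  proof (cases "length xs = 1")
    case True
    then obtain q where xs: "xs = [q]" by (cases xs) auto
    have "pmf (map_pmf (\<lambda>q. [q]) (pinit B)) [q] = pmf (pinit B) q"
      by (rule pmf_map_inj') (auto simp: inj_def)
    then show ?thesis using xs by (simp add: prefix_prob_def)
  next
    case False
    then show ?thesis by (auto intro!: pmf_map_outside)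
  qed
next
  case (Suc n)
  let ?f = "\<lambda>ys. pmf (map_pmf (\<lambda>q. ys @ [q]) (ptrans B (last ys) (w n))) xs"
  have "pmf (rpath B w (Suc n)) xs = (\<integral>ys. ?f ys \<partial>measure_pmf (rpath B w n))"
    by (simp add: pmf_bind)
  also have "\<dots> = (if length xs = Suc (Suc n) then prefix_prob B w (Suc n) (\<lambda>i. xs ! i) else 0)"
  proof (cases "length xs = Suc (Suc n)")
    case True
    define ys where "ys = butlast xs"
    define q where "q = last xs"
    have xs: "xs = ys @ [q]" using True unfolding ys_def q_def
      by (metis append_butlast_last_id list.size(3) nat.distinct(1))
    have ly: "length ys = Suc n" using True by (simp add: ys_def)
    have fz: "?f zs = 0" if "zs \<noteq> ys" for zs
      using that xs by (intro pmf_map_outside) auto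
    have fy: "?f ys = pmf (ptrans B (last ys) (w n)) q"
      unfolding xs by (rule pmf_map_inj') (auto simp: inj_def)
    have "(\<integral>zs. ?f zs \<partial>measure_pmf (rpath B w n)) = (\<Sum>a\<in>{ys}. pmf (rpath B w n) a *\<^sub>R ?f a)"
      by (rule integral_measure_pmf) (use fz in auto)
    also have "\<dots> = prefix_prob B w n (\<lambda>i. ys ! i) * pmf (ptrans B (ys ! n) (w n)) q"
      using Suc.IH[of ys] ly fy by (subst (asm) last_conv_nth) auto
    also have "\<dots> = prefix_prob B w (Suc n) (\<lambda>i. xs ! i)"
      unfolding prefix_prob_Suc using ly
      by (subst prefix_prob_cong[of n "\<lambda>i. xs ! i" "\<lambda>i. ys ! i"]) (auto simp: xs nth_append)
    finally show ?thesis using True by simp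
  next
    case False
    have "?f zs = 0" if "zs \<in> set_pmf (rpath B w n)" for zs
      using path_support[OF that] False by (intro pmf_map_outside) auto
    then have "(\<integral>zs. ?f zs \<partial>measure_pmf (rpath B w n)) = (\<Sum>a\<in>{}. pmf (rpath B w n) a *\<^sub>R ?f a)"
      by (intro integral_measure_pmf) auto
    then show ?thesis using False by simp
  qed
  finally show ?case .
qed

lemma map_meas: "(\<lambda>r. map r [0..<Suc n]) \<in> measurable seq_space (count_space UNIV)"
proof (subst measurable_count_space_eq2_countable, safe)
  fix xs :: "nat list"
  have "(\<lambda>r. map r [0..<Suc n]) -` {xs} = (if length xs = Suc n then cyl n (\<lambda>i. xs ! i) else {})"
  proof (cases "length xs = Suc n")
    case True
    have "map r [0..<Suc n] = xs \<longleftrightarrow> (\<forall>i\<le>n. r i = xs ! i)" for r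
      using True by (auto simp: list_eq_iff_nth_eq simp del: upt_Suc)
    then show ?thesis using True by (auto simp: cyl_alt)
  qed auto
  then show "(\<lambda>r. map r [0..<Suc n]) -` {xs} \<inter> space seq_space \<in> sets seq_space" by simp
qed simp

lemma distr_path:
  "distr (run_measure B w) (count_space UNIV) (\<lambda>r. map r [0..<Suc n]) = measure_pmf (rpath B w n)"
proof (rule measure_eqI_countable[where A=UNIV])
  interpret prob_space "run_measure B w" by (rule RM_prob)
  fix xs :: "nat list"
  have pre: "(\<lambda>r. map r [0..<Suc n]) -` {xs} = (if length xs = Suc n then cyl n (\<lambda>i. xs ! i) else {})"
  proof (cases "length xs = Suc n")
    case True
    have "map r [0..<Suc n] = xs \<longleftrightarrow> (\<forall>i\<le>n. r i = xs ! i)" for r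
      using True by (auto simp: list_eq_iff_nth_eq simp del: upt_Suc)
    then show ?thesis using True by (auto simp: cyl_alt)
  qed auto
  have "emeasure (distr (run_measure B w) (count_space UNIV) (\<lambda>r. map r [0..<Suc n])) {xs}
      = emeasure (run_measure B w) ((\<lambda>r. map r [0..<Suc n]) -` {xs})"
    by (subst emeasure_distr) (auto simp: measurable_cong_sets[OF RM_sets refl] map_meas simp del: upt_Suc)
  also have "\<dots> = pmf (rpath B w n) xs"
    unfolding pre path_pmf by (auto simp: emeasure_eq_measure RM_cyl)
  finally show "emeasure (distr (run_measure B w) (count_space UNIV) (\<lambda>r. map r [0..<Suc n])) {xs} =
     emeasure (measure_pmf (rpath B w n)) {xs}" by (simp add: emeasure_pmf_single)
qed auto

lemma RM_fh:
  assumes "\<And>r r'. (\<And>i. i \<le> n \<Longrightarrow> r i = r' i) \<Longrightarrow> P r = P r'"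
  shows "measure (run_measure B w) {r. P r} = measure_pmf.prob (rpath B w n) {xs. P (\<lambda>i. xs ! i)}"
proof -
  have eq: "{r. P r} = (\<lambda>r. map r [0..<Suc n]) -` {xs. P (\<lambda>i. xs ! i)}"
  proof -
    have "P r = P (\<lambda>i. map r [0..<Suc n] ! i)" for r
      by (rule assms) (simp del: upt_Suc add: nth_map_upt)
    then show ?thesis by auto
  qed
  have "measure (run_measure B w) {r. P r} =
    measure (distr (run_measure B w) (count_space UNIV) (\<lambda>r. map r [0..<Suc n])) {xs. P (\<lambda>i. xs ! i)}"
    unfolding eq by (subst measure_distr) (auto simp: measurable_cong_sets[OF RM_sets refl] map_meas simp del: upt_Suc)
  then show ?thesis by (simp add: distr_path del: upt_Suc)
qed

lemma fh_sets:
  assumes "\<And>r r'. (\<And>i. i \<le> n \<Longrightarrow> r i = r' i) \<Longrightarrow> P r = P r'"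
  shows "{r. P r} \<in> sets seq_space"
proof -
  have eq: "{r. P r} = (\<lambda>r. map r [0..<Suc n]) -` {xs. P (\<lambda>i. xs ! i)}"
  proof -
    have "P r = P (\<lambda>i. map r [0..<Suc n] ! i)" for r
      by (rule assms) (simp del: upt_Suc add: nth_map_upt)
    then show ?thesis by auto
  qed
  show ?thesis unfolding eq using measurable_sets[OF map_meas, of "{xs. P (\<lambda>i. xs ! i)}" n] by simp
qed

lemma path_cong_word: "(\<And>i. i < n \<Longrightarrow> v i = w i) \<Longrightarrow> rpath B v n = rpath B w n"
  by (induction n) auto

definition startat :: "'a pwa \<Rightarrow> nat \<Rightarrow> 'a pwa" where
  "startat B q = B\<lparr>pinit := return_pmf q\<rparr>"

lemma startat_simps[simp]: "pinit (startat B q) = return_pmf q" "ptrans (startat B q) = ptrans B"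
  "pweight (startat B q) = pweight B" "pstates (startat B q) = pstates B"
  by (simp_all add: startat_def)

lemma path_split:
  "rpath B w (t + n) = rpath B w t \<bind> (\<lambda>xs. map_pmf (\<lambda>ys. xs @ tl ys) (rpath (startat B (last xs)) (\<lambda>i. w (t + i)) n))"
proof (induction n)
  case 0
  have "rpath B w t \<bind> (\<lambda>xs. map_pmf (\<lambda>ys. xs @ tl ys) (rpath (startat B (last xs)) (\<lambda>i. w (t + i)) 0))
      = rpath B w t \<bind> return_pmf"
    by (simp add: map_pmf_def bind_return_pmf)
  then show ?case by (simp add: bind_return_pmf')
next
  case (Suc n)
  have "rpath B w (t + Suc n) = rpath B w (t + n) \<bind> (\<lambda>xs. map_pmf (\<lambda>q. xs @ [q]) (ptrans B (last xs) (w (t + n))))"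
    by simp
  also have "\<dots> = rpath B w t \<bind> (\<lambda>xs. rpath (startat B (last xs)) (\<lambda>i. w (t + i)) n \<bind>
       (\<lambda>ys. map_pmf (\<lambda>q. xs @ tl ys @ [q]) (ptrans B (last (xs @ tl ys)) (w (t + n)))))"
    unfolding Suc by (simp add: bind_assoc_pmf bind_map_pmf)
  also have "\<dots> = rpath B w t \<bind> (\<lambda>xs. rpath (startat B (last xs)) (\<lambda>i. w (t + i)) n \<bind>
       (\<lambda>ys. map_pmf (\<lambda>q. xs @ tl (ys @ [q])) (ptrans B (last ys) (w (t + n)))))"
  proof (intro bind_pmf_cong refl)
    fix xs ys assume xs: "xs \<in> set_pmf (rpath B w t)" and ys: "ys \<in> set_pmf (rpath (startat B (last xs)) (\<lambda>i. w (t + i)) n)"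
    from path_support[OF xs] have lx: "length xs = Suc t" by simp
    from path_support[OF ys] have ly: "length ys = Suc n" and y0: "ys ! 0 = last xs" by auto
    have "last (xs @ tl ys) = last ys"
    proof (cases "tl ys = []")
      case True
      then have "ys = [ys ! 0]" using ly by (cases ys) auto
      then show ?thesis using True y0 lx by (metis append_Nil2 last_ConsL)
    next
      case False
      then show ?thesis by (simp add: last_tl)
    qed
    moreover have "tl (ys @ [q]) = tl ys @ [q]" for q using ly by (cases ys) auto
    ultimately show "map_pmf (\<lambda>q. xs @ tl ys @ [q]) (ptrans B (last (xs @ tl ys)) (w (t + n))) =
         map_pmf (\<lambda>q. xs @ tl (ys @ [q])) (ptrans B (last ys) (w (t + n)))" by simp
  qed
  also have "\<dots> = rpath B w t \<bind> (\<lambda>xs. map_pmf (\<lambda>ys. xs @ tl ys) (rpath (startat B (last xs)) (\<lambda>i. w (t + i)) (Suc n)))"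
    by (simp add: map_bind_pmf map_pmf_comp)
  finally show ?case .
qed


definition psum :: "'a pwa \<Rightarrow> (nat \<Rightarrow> 'a) \<Rightarrow> (nat \<Rightarrow> nat) \<Rightarrow> nat \<Rightarrow> real" where
  "psum B w r n = (\<Sum>i<n. weight_seq B w r i)"

definition avg :: "'a pwa \<Rightarrow> (nat \<Rightarrow> 'a) \<Rightarrow> (nat \<Rightarrow> nat) \<Rightarrow> nat \<Rightarrow> real" where
  "avg B w r n = psum B w r n / real n"

lemma LimAvg_avg: "LimAvg (weight_seq B w r) = liminf (\<lambda>n. ereal (avg B w r n))"
  by (simp add: LimAvg_def avg_def psum_def)

lemma ws_meas[measurable]: "(\<lambda>r. weight_seq B w r i) \<in> borel_measurable seq_space"
proof -
  have "(\<lambda>r. (r i, r (Suc i))) \<in> measurable seq_space (count_space UNIV)"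
  proof (subst measurable_count_space_eq2_countable, safe)
    fix a b :: nat
    have "(\<lambda>r. (r i, r (Suc i))) -` {(a, b)} = {r. r i = a} \<inter> {r. r (Suc i) = b}" by auto
    also have "\<dots> \<in> sets seq_space" by measurable
    finally show "(\<lambda>r. (r i, r (Suc i))) -` {(a, b)} \<inter> space seq_space \<in> sets seq_space" by simp
  qed simp
  moreover have "(\<lambda>p. real_of_rat (pweight B (fst p) (w i) (snd p))) \<in> borel_measurable (count_space UNIV)"
    by simp
  ultimately have "(\<lambda>p. real_of_rat (pweight B (fst p) (w i) (snd p))) \<circ> (\<lambda>r. (r i, r (Suc i))) \<in> borel_measurable seq_space"
    by (rule measurable_comp)
  then show ?thesis by (simp add: weight_seq_def comp_def)
qed

lemma avg_meas[measurable]: "(\<lambda>r. avg B w r n) \<in> borel_measurable seq_space"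
  unfolding avg_def psum_def by measurable

lemma LimAvg_meas[measurable]: "(\<lambda>r. LimAvg (weight_seq B w r)) \<in> borel_measurable seq_space"
  unfolding LimAvg_avg by (intro borel_measurable_liminf) measurable

lemma LimAvg_set_sets[measurable]: "{r. ereal \<eta> \<le> LimAvg (weight_seq B w r)} \<in> sets seq_space"
proof -
  have "{r. ereal \<eta> \<le> LimAvg (weight_seq B w r)} = {r \<in> space seq_space. ereal \<eta> \<le> LimAvg (weight_seq B w r)}"
    by simp
  also have "\<dots> \<in> sets seq_space" by measurable
  finally show ?thesis .
qed

lemma Lpos_set: "{r \<in> space (run_measure B w). LimAvg (weight_seq B w r) \<ge> ereal \<eta>} = {r. ereal \<eta> \<le> LimAvg (weight_seq B w r)}"
  by simp

lemma Lpos_le: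
  assumes "\<And>\<eta>. \<eta> > c \<Longrightarrow> measure (run_measure B w) {r. ereal \<eta> \<le> LimAvg (weight_seq B w r)} = 0"
  shows "L_pos B w \<le> ereal c"
  unfolding L_pos_def Lpos_set
proof (rule Sup_least)
  fix x assume "x \<in> ereal ` {\<eta>. 0 < measure (run_measure B w) {r. ereal \<eta> \<le> LimAvg (weight_seq B w r)}}"
  then obtain \<eta> where "x = ereal \<eta>" "0 < measure (run_measure B w) {r. ereal \<eta> \<le> LimAvg (weight_seq B w r)}" by auto
  with assms[of \<eta>] show "x \<le> ereal c" by (cases "\<eta> > c") auto
qed

lemma Lpos_less_imp:
  assumes "L_pos B w < ereal \<eta>"
  shows "measure (run_measure B w) {r. ereal \<eta> \<le> LimAvg (weight_seq B w r)} = 0"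
proof (rule ccontr)
  assume "measure (run_measure B w) {r. ereal \<eta> \<le> LimAvg (weight_seq B w r)} \<noteq> 0"
  then have "0 < measure (run_measure B w) {r. ereal \<eta> \<le> LimAvg (weight_seq B w r)}"
    by (simp add: less_le)
  then have "ereal \<eta> \<le> L_pos B w"
    unfolding L_pos_def Lpos_set by (intro Sup_upper) auto
  with assms show False by simp
qed

lemma Las_ge:
  assumes "measure (run_measure B w) {r. ereal \<eta> \<le> LimAvg (weight_seq B w r)} = 1"
  shows "ereal \<eta> \<le> L_as B w"
  unfolding L_as_def Lpos_set using assms by (intro Sup_upper) auto

lemma Las_le:
  assumes "\<And>\<eta>. \<eta> > c \<Longrightarrow> measure (run_measure B w) {r. ereal \<eta> \<le> LimAvg (weight_seq B w r)} \<noteq> 1"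
  shows "L_as B w \<le> ereal c"
  unfolding L_as_def Lpos_set
proof (rule Sup_least)
  fix x assume "x \<in> ereal ` {\<eta>. measure (run_measure B w) {r. ereal \<eta> \<le> LimAvg (weight_seq B w r)} = 1}"
  then obtain \<eta> where "x = ereal \<eta>" "measure (run_measure B w) {r. ereal \<eta> \<le> LimAvg (weight_seq B w r)} = 1" by auto
  with assms[of \<eta>] show "x \<le> ereal c" by (cases "\<eta> > c") auto
qed

lemma Las_greater_imp:
  assumes "ereal \<eta> < L_as B w"
  shows "measure (run_measure B w) {r. ereal \<eta> \<le> LimAvg (weight_seq B w r)} = 1"
proof -
  interpret prob_space "run_measure B w" by (rule RM_prob)
  from assms obtain x where x: "x \<in> ereal ` {\<eta>. measure (run_measure B w) {r. ereal \<eta> \<le> LimAvg (weight_seq B w r)} = 1}"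
    and lt: "ereal \<eta> < x"
    unfolding L_as_def Lpos_set less_Sup_iff by blast
  then obtain \<eta>' where x': "x = ereal \<eta>'" and m: "measure (run_measure B w) {r. ereal \<eta>' \<le> LimAvg (weight_seq B w r)} = 1"
    by auto
  have le: "ereal \<eta> \<le> ereal \<eta>'" using lt x' by simp
  have "{r. ereal \<eta>' \<le> LimAvg (weight_seq B w r)} \<subseteq> {r. ereal \<eta> \<le> LimAvg (weight_seq B w r)}"
  proof
    fix r assume "r \<in> {r. ereal \<eta>' \<le> LimAvg (weight_seq B w r)}"
    then have "ereal \<eta>' \<le> LimAvg (weight_seq B w r)" by (rule CollectD)
    from order.trans[OF le this] show "r \<in> {r. ereal \<eta> \<le> LimAvg (weight_seq B w r)}" by simp
  qed
  then have "measure (run_measure B w) {r. ereal \<eta>' \<le> LimAvg (weight_seq B w r)} \<le> measure (run_measure B w) {r. ereal \<eta> \<le> LimAvg (weight_seq B w r)}"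
    by (intro finite_measure_mono) auto
  then show ?thesis using m prob_le_1[of "{r. ereal \<eta> \<le> LimAvg (weight_seq B w r)}"] by simp
qed


lemma liminf_le_freq:
  fixes X :: "nat \<Rightarrow> ereal"
  assumes "\<And>N. \<exists>n\<ge>N. X n \<le> c"
  shows "liminf X \<le> c"
proof (rule ccontr)
  assume "\<not> liminf X \<le> c"
  then have "c < liminf X" by simp
  then have "eventually (\<lambda>n. c < X n) sequentially"
    using le_Liminf_iff[of "liminf X" sequentially X] by auto
  then obtain N where "\<And>n. n \<ge> N \<Longrightarrow> c < X n" by (auto simp: eventually_sequentially)
  with assms[of N] show False by force
qed

lemma liminf_less_freq:
  fixes X :: "nat \<Rightarrow> ereal"
  assumes "liminf X < c"
  shows "\<exists>n\<ge>N. X n < c"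
proof (rule ccontr)
  assume "\<not> (\<exists>n\<ge>N. X n < c)"
  then have "eventually (\<lambda>n. c \<le> X n) sequentially" by (auto simp: eventually_sequentially not_less)
  then have "c \<le> liminf X" by (rule Liminf_bounded)
  with assms show False by simp
qed

lemma liminf_gt_ev:
  fixes X :: "nat \<Rightarrow> ereal"
  assumes "y < liminf X"
  shows "\<exists>N. \<forall>n\<ge>N. y < X n"
  using assms le_Liminf_iff[of "liminf X" sequentially X] by (auto simp: eventually_sequentially)

lemma avg_cong_run:
  assumes "\<And>i. i \<le> n \<Longrightarrow> r i = r' i" "s \<le> n"
  shows "avg B v r s = avg B v r' s"
  unfolding avg_def psum_def weight_seq_def using assms by (intro arg_cong2[where f="(/)"] sum.cong) auto

lemma avg_cong_word:
  assumes "\<And>i. i < n \<Longrightarrow> v i = v' i" "s \<le> n"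
  shows "avg B v r s = avg B v' r s"
  unfolding avg_def psum_def weight_seq_def using assms by (intro arg_cong2[where f="(/)"] sum.cong) auto

lemma RM_word_cong:
  assumes "\<And>i. i < N \<Longrightarrow> v i = w i"
    and "\<And>r r'. (\<And>i. i \<le> N \<Longrightarrow> r i = r' i) \<Longrightarrow> P r = P r'"
  shows "measure (run_measure B v) {r. P r} = measure (run_measure B w) {r. P r}"
proof -
  have "measure (run_measure B v) {r. P r} = measure_pmf.prob (rpath B v N) {xs. P (\<lambda>i. xs ! i)}"
    by (rule RM_fh) (rule assms(2))
  also have "rpath B v N = rpath B w N"
    by (rule path_cong_word) (rule assms(1))
  also have "measure_pmf.prob (rpath B w N) {xs. P (\<lambda>i. xs ! i)} = measure (run_measure B w) {r. P r}"
    by (rule RM_fh[symmetric]) (rule assms(2))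
  finally show ?thesis .
qed


lemma dip_lemma:
  assumes null: "measure (run_measure B v) {r. ereal (1/2) \<le> LimAvg (weight_seq B v r)} = 0" and d: "\<delta> > 0"
  shows "\<exists>N\<ge>T. measure (run_measure B v) {r. \<exists>s\<in>{T..N}. avg B v r s < 1/2} \<ge> 1 - \<delta>"
proof -
  interpret prob_space "run_measure B v" by (rule RM_prob)
  define S where "S N = {r. \<exists>s\<in>{T..T+N}. avg B v r s < 1/2}" for N
  have Ssets: "S N \<in> sets (run_measure B v)" for N
  proof -
    have "S N = {r \<in> space seq_space. \<exists>s\<in>{T..T+N}. avg B v r s < 1/2}" by (simp add: S_def)
    also have "\<dots> \<in> sets seq_space" by measurable
    finally show ?thesis by simp
  qed
  have inc: "incseq S" unfolding S_def incseq_def by fastforce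
  have sub: "UNIV - {r. ereal (1/2) \<le> LimAvg (weight_seq B v r)} \<subseteq> (\<Union>N. S N)"
  proof
    fix r assume "r \<in> UNIV - {r. ereal (1/2) \<le> LimAvg (weight_seq B v r)}"
    then have "liminf (\<lambda>n. ereal (avg B v r n)) < ereal (1/2)" by (simp add: LimAvg_avg not_le)
    from liminf_less_freq[OF this, of T] obtain s where "s \<ge> T" "avg B v r s < 1/2" by auto
    then have "r \<in> S (s - T)" unfolding S_def by (intro CollectI bexI[of _ s]) auto
    then show "r \<in> (\<Union>N. S N)" by blast
  qed
  have "1 - 0 \<le> measure (run_measure B v) (\<Union>N. S N)"
  proof -
    have "measure (run_measure B v) (UNIV - {r. ereal (1/2) \<le> LimAvg (weight_seq B v r)}) = 1 - 0"
      using prob_compl[of "{r. ereal (1/2) \<le> LimAvg (weight_seq B v r)}"] null by simp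
    moreover have "measure (run_measure B v) (UNIV - {r. ereal (1/2) \<le> LimAvg (weight_seq B v r)}) \<le> measure (run_measure B v) (\<Union>N. S N)"
      using sub Ssets by (intro finite_measure_mono) auto
    ultimately show ?thesis by simp
  qed
  moreover have lim: "(\<lambda>N. measure (run_measure B v) (S N)) \<longlonglongrightarrow> measure (run_measure B v) (\<Union>N. S N)"
    by (rule Lim_measure_incseq) (use Ssets inc in auto)
  ultimately have "measure (run_measure B v) (\<Union>N. S N) - \<delta> < measure (run_measure B v) (\<Union>N. S N)" using d by simp
  from order_tendstoD(1)[OF lim this] obtain N where
    "measure (run_measure B v) (\<Union>N. S N) - \<delta> < measure (run_measure B v) (S N)"
    by (auto simp: eventually_sequentially)
  then have "1 - \<delta> \<le> measure (run_measure B v) (S N)"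
    using \<open>1 - 0 \<le> measure (run_measure B v) (\<Union>N. S N)\<close> by simp
  then show ?thesis unfolding S_def by (intro exI[of _ "T+N"]) auto
qed

definition A0 :: "nat pwa" where
  "A0 = \<lparr>pstates = {0}, pinit = return_pmf 0, ptrans = (\<lambda>_ _. return_pmf 0), pweight = (\<lambda>_ \<sigma> _. of_nat \<sigma>)\<rparr>"

lemma wf_A0: "wf_pwa {0,1} A0"
  by (simp add: wf_pwa_def A0_def)

lemma ws_A0: "weight_seq A0 w r i = real (w i)"
  by (simp add: weight_seq_def A0_def)

definition wavg :: "(nat \<Rightarrow> nat) \<Rightarrow> nat \<Rightarrow> real" where
  "wavg w n = (\<Sum>i<n. real (w i)) / real n"

lemma LimAvg_A0: "LimAvg (weight_seq A0 w r) = liminf (\<lambda>n. ereal (wavg w n))"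
  by (simp add: LimAvg_def ws_A0 wavg_def)

lemma wavg_bounds: "w \<in> words {0,1} \<Longrightarrow> 0 \<le> wavg w n \<and> wavg w n \<le> 1"
proof -
  assume w: "w \<in> words {0,1}"
  have le: "(\<Sum>i<n. real (w i)) \<le> real n"
  proof -
    have wi: "w i \<le> 1" for i
    proof -
      have "w i \<in> {0,1}" using w by (simp add: words_def)
      then show ?thesis by auto
    qed
    have "(\<Sum>i<n. real (w i)) \<le> (\<Sum>i<n. 1)"
      using wi by (intro sum_mono) auto
    then show ?thesis by simp
  qed
  show ?thesis
    using le by (cases "n = 0") (auto simp: wavg_def intro!: sum_nonneg divide_nonneg_nonneg)
qed

lemma LA0_fin:
  assumes "w \<in> words {0,1}"
  shows "\<exists>x. liminf (\<lambda>n. ereal (wavg w n)) = ereal x \<and> 0 \<le> x \<and> x \<le> 1"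
proof -
  have lo: "0 \<le> liminf (\<lambda>n. ereal (wavg w n))"
    using wavg_bounds[OF assms] by (intro Liminf_bounded) auto
  have hi: "liminf (\<lambda>n. ereal (wavg w n)) \<le> 1"
    using wavg_bounds[OF assms] by (intro Liminf_le) auto
  from lo hi show ?thesis
    by (cases "liminf (\<lambda>n. ereal (wavg w n))") auto
qed

lemma L_A0:
  assumes "w \<in> words {0,1}"
  shows "L_pos A0 w = liminf (\<lambda>n. ereal (wavg w n))" "L_as A0 w = liminf (\<lambda>n. ereal (wavg w n))"
proof -
  interpret prob_space "run_measure A0 w" by (rule RM_prob)
  obtain x where x: "liminf (\<lambda>n. ereal (wavg w n)) = ereal x" using LA0_fin[OF assms] by blast
  have m: "measure (run_measure A0 w) {r \<in> space (run_measure A0 w). LimAvg (weight_seq A0 w r) \<ge> ereal \<eta>}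
     = (if \<eta> \<le> x then 1 else 0)" for \<eta>
    using prob_space by (auto simp: LimAvg_A0 x)
  have e: "ereal ` {\<eta>. \<eta> \<le> x} = {y. \<exists>\<eta>. y = ereal \<eta> \<and> \<eta> \<le> x}" by auto
  have S: "Sup (ereal ` {\<eta>. \<eta> \<le> x}) = ereal x"
    by (rule antisym) (auto intro: Sup_least Sup_upper)
  show "L_pos A0 w = liminf (\<lambda>n. ereal (wavg w n))"
    unfolding L_pos_def m x using S by (simp cong: rev_conj_cong)
  show "L_as A0 w = liminf (\<lambda>n. ereal (wavg w n))"
    unfolding L_as_def m x using S by simp
qed


lemma wavg_ev1:
  assumes "\<forall>i\<ge>t. v i = 1" "w \<in> words {0,1}" "v = w"
  shows "ereal (3/4) \<le> liminf (\<lambda>n. ereal (wavg v n))"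
proof (rule Liminf_bounded, unfold eventually_sequentially, intro exI allI impI)
  fix n assume n: "4 * t + 1 \<le> n"
  have "real n - real t \<le> (\<Sum>i<n. real (v i))"
  proof -
    have "real n - real t = (\<Sum>i\<in>{t..<n}. 1)" using n by simp
    also have "\<dots> = (\<Sum>i\<in>{t..<n}. real (v i))" using assms(1) by (intro sum.cong) auto
    also have "\<dots> \<le> (\<Sum>i<n. real (v i))" by (intro sum_mono2) auto
    finally show ?thesis .
  qed
  moreover have "3/4 * real n \<le> real n - real t" using n by simp
  ultimately have "3/4 * real n \<le> (\<Sum>i<n. real (v i))" by linarith
  moreover have "real n > 0" using n by simp
  ultimately show "ereal (3/4) \<le> ereal (wavg v n)" by (simp add: wavg_def field_simps)
qed

lemma one_minus_ereal[simp]: "1 - ereal x = ereal (1 - x)"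
  by (simp add: one_ereal_def)

theorem pos_case: "\<not> (\<exists>B. wf_pwa {0,1} B \<and> (\<forall>w\<in>words {0,1}. L_pos B w = 1 - L_pos A0 w))"
proof
  assume "\<exists>B. wf_pwa {0,1} B \<and> (\<forall>w\<in>words {0,1}. L_pos B w = 1 - L_pos A0 w)"
  then obtain B :: "nat pwa" where wfB: "wf_pwa {0,1} B" and H: "\<And>w. w \<in> words {0,1} \<Longrightarrow> L_pos B w = 1 - L_pos A0 w"
    by blast
  have low: "measure (run_measure B v) {r. ereal (1/2) \<le> LimAvg (weight_seq B v r)} = 0"
    if v: "v \<in> words {0,1}" "\<forall>i\<ge>t. v i = 1" for v t
  proof -
    obtain x where x: "liminf (\<lambda>n. ereal (wavg v n)) = ereal x" using LA0_fin[OF v(1)] by blast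
    have "ereal (3/4) \<le> ereal x" using wavg_ev1[OF v(2) v(1) refl] x by simp
    then have "L_pos B v < ereal (1/2)" using H[OF v(1)] L_A0(1)[OF v(1)] x by simp
    then show ?thesis by (rule Lpos_less_imp)
  qed
  define Nsel where "Nsel v t k = (SOME N. N \<ge> t \<and> 1 - 1 / real (Suc k) \<le> measure (run_measure B v) {r. \<exists>s\<in>{t..N}. avg B v r s < 1/2})"
    for v :: "nat \<Rightarrow> nat" and t k :: nat
  have Nsel: "Nsel v t k \<ge> t \<and> 1 - 1 / real (Suc k) \<le> measure (run_measure B v) {r. \<exists>s\<in>{t..Nsel v t k}. avg B v r s < 1/2}"
    if v: "v \<in> words {0,1}" "\<forall>i\<ge>t. v i = 1" for v t k
  proof -
    have "\<exists>N\<ge>t. measure (run_measure B v) {r. \<exists>s\<in>{t..N}. avg B v r s < 1/2} \<ge> 1 - 1 / real (Suc k)"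
      by (rule dip_lemma[OF low[OF v]]) simp
    then show ?thesis unfolding Nsel_def by (rule someI_ex[where P="\<lambda>N. N \<ge> t \<and> 1 - 1 / real (Suc k) \<le> measure (run_measure B v) {r. \<exists>s\<in>{t..N}. avg B v r s < 1/2}"]) 
  qed
  define F where "F k p = ((\<lambda>i. if i < Nsel (fst p) (snd p) k then fst p i else if i < 4 * Nsel (fst p) (snd p) k then 0 else 1), 4 * Nsel (fst p) (snd p) k)"
    for k :: nat and p :: "(nat \<Rightarrow> nat) \<times> nat"
  obtain st where st_0: "st 0 = ((\<lambda>_::nat. 1::nat), 1::nat)" and st_S: "\<And>k. st (Suc k) = F k (st k)"
  proof -
    show ?thesis by (rule that[of "rec_nat ((\<lambda>_::nat. 1::nat), 1::nat) F"]) simp_all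
  qed
  define vk where "vk k = fst (st k)" for k
  define tk where "tk k = snd (st k)" for k
  define Nk where "Nk k = Nsel (vk k) (tk k) k" for k
  have st0: "vk 0 = (\<lambda>_. 1)" "tk 0 = 1" by (simp_all add: vk_def tk_def st_0)
  have stS: "vk (Suc k) = (\<lambda>i. if i < Nk k then vk k i else if i < 4 * Nk k then 0 else 1)" "tk (Suc k) = 4 * Nk k" for k
    unfolding vk_def tk_def Nk_def st_S F_def by simp_all
  have inv: "vk k \<in> words {0,1} \<and> (\<forall>i\<ge>tk k. vk k i = 1) \<and> tk k \<ge> 1" for k
  proof (induction k)
    case 0 then show ?case by (simp add: st0 words_def)
  next
    case (Suc k)
    then have N: "Nk k \<ge> tk k" using Nsel[of "vk k" "tk k" k] by (simp add: Nk_def)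
    show ?case using Suc N by (auto simp: stS words_def)
  qed
  have NkP: "Nk k \<ge> tk k \<and> 1 - 1 / real (Suc k) \<le> measure (run_measure B (vk k)) {r. \<exists>s\<in>{tk k..Nk k}. avg B (vk k) r s < 1/2}" for k
    using Nsel[of "vk k" "tk k" k] inv[of k] by (simp add: Nk_def)
  have tk_ge: "tk k \<ge> Suc k" for k
  proof (induction k)
    case 0 then show ?case by (simp add: st0)
  next
    case (Suc k) then show ?case using NkP[of k] by (simp add: stS)
  qed
  have tk_mono: "k \<le> j \<Longrightarrow> tk k \<le> tk j" for k j
  proof (induction j rule: dec_induct)
    case (step j) then show ?case using NkP[of j] by (simp add: stS)
  qed simp
  have agree: "k \<le> j \<Longrightarrow> i < tk k \<Longrightarrow> vk j i = vk k i" for k j i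
  proof (induction j rule: dec_induct)
    case (step j)
    have "i < Nk j" using step tk_mono[of k j] NkP[of j] by linarith
    then show ?case using step by (simp add: stS)
  qed simp
  define w where "w i = vk (Suc i) i" for i
  have wagree: "i < tk k \<Longrightarrow> w i = vk k i" for i k
  proof -
    assume i: "i < tk k"
    have i2: "i < tk (Suc i)" using tk_ge[of "Suc i"] by simp
    show "w i = vk k i"
    proof (cases "Suc i \<le> k")
      case True then show ?thesis unfolding w_def using agree[OF True i2] by simp
    next
      case False then show ?thesis unfolding w_def using agree[of k "Suc i" i] i by simp
    qed
  qed
  have w01: "w \<in> words {0,1}" using inv by (auto simp: w_def words_def)
  have w_pre: "i < Nk k \<Longrightarrow> w i = vk k i" for i k
    using wagree[of i "Suc k"] by (simp add: stS)
  have w_blk: "Nk k \<le> i \<Longrightarrow> i < 4 * Nk k \<Longrightarrow> w i = 0" for i k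
    using wagree[of i "Suc k"] by (simp add: stS)
  have LA: "L_pos A0 w \<le> ereal (1/4)"
    unfolding L_A0(1)[OF w01]
  proof (rule liminf_le_freq)
    fix N
    let ?n = "4 * Nk N"
    have n: "?n \<ge> N" using NkP[of N] tk_ge[of N] by linarith
    have pos: "Nk N > 0" using NkP[of N] tk_ge[of N] by linarith
    have "(\<Sum>i<?n. real (w i)) = (\<Sum>i<Nk N. real (w i)) + (\<Sum>i\<in>{Nk N..<?n}. real (w i))"
      by (subst sum.atLeastLessThan_concat[of 0 "Nk N" ?n, symmetric, simplified lessThan_atLeast0[symmetric]]) 
         (auto simp: lessThan_atLeast0)
    also have "(\<Sum>i\<in>{Nk N..<?n}. real (w i)) = 0" using w_blk by (intro sum.neutral) auto
    also have "(\<Sum>i<Nk N. real (w i)) \<le> (\<Sum>i<Nk N. 1)"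
      using w01 unfolding words_def by (intro sum_mono) (metis insert_iff mem_Collect_eq singletonD of_nat_0 of_nat_1 order_refl zero_le_one)
    finally have "(\<Sum>i<?n. real (w i)) \<le> real (Nk N)" by simp
    then have "wavg w ?n \<le> 1/4" using pos by (simp add: wavg_def field_simps)
    then show "\<exists>n\<ge>N. ereal (wavg w n) \<le> ereal (1/4)" using n by (intro exI[of _ ?n]) auto
  qed
  obtain x where x: "L_pos A0 w = ereal x" using LA0_fin[OF w01] L_A0(1)[OF w01] by auto
  have LB: "ereal (3/4) \<le> L_pos B w" using H[OF w01] LA x by simp
  interpret prob_space "run_measure B w" by (rule RM_prob)
  have Sw: "1 - 1 / real (Suc k) \<le> measure (run_measure B w) {r. \<exists>s\<in>{tk k..Nk k}. avg B w r s < 1/2}" for k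
  proof -
    have "{r. \<exists>s\<in>{tk k..Nk k}. avg B (vk k) r s < 1/2} = {r. \<exists>s\<in>{tk k..Nk k}. avg B w r s < 1/2}"
    proof -
      have "avg B (vk k) r s = avg B w r s" if "s \<le> Nk k" for r s
        by (rule avg_cong_word[OF _ that]) (simp add: w_pre)
      then show ?thesis by auto
    qed
    moreover have "measure (run_measure B (vk k)) {r. \<exists>s\<in>{tk k..Nk k}. avg B w r s < 1/2} =
        measure (run_measure B w) {r. \<exists>s\<in>{tk k..Nk k}. avg B w r s < 1/2}"
    proof (rule RM_word_cong)
      show "vk k i = w i" if "i < Nk k" for i using w_pre[OF that] by simp
      fix r r' :: "nat \<Rightarrow> nat" assume "\<And>i. i \<le> Nk k \<Longrightarrow> r i = r' i"
      then have "avg B w r s = avg B w r' s" if "s \<le> Nk k" for s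
        by (rule avg_cong_run[OF _ that])
      then show "(\<exists>s\<in>{tk k..Nk k}. avg B w r s < 1/2) = (\<exists>s\<in>{tk k..Nk k}. avg B w r' s < 1/2)"
        by auto
    qed
    ultimately show ?thesis using NkP[of k] by simp
  qed
  define G where "G K = {r. \<forall>s\<ge>K. 1/2 \<le> avg B w r s}" for K
  have Gsets: "G K \<in> sets (run_measure B w)" for K
  proof -
    have "G K = (\<Inter>s\<in>{K..}. {r \<in> space seq_space. 1/2 \<le> avg B w r s})" by (auto simp: G_def)
    also have "\<dots> \<in> sets seq_space"
    proof -
      have "{r \<in> space seq_space. 1/2 \<le> avg B w r s} \<in> sets seq_space" for s by measurable
      then show ?thesis by (intro sets.countable_INT') auto
    qed
    finally show ?thesis by simp
  qed
  have G0: "measure (run_measure B w) (G K) = 0" for K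
  proof -
    have le: "measure (run_measure B w) (G K) \<le> 1 / real (Suc k)" if k: "k \<ge> K" for k
    proof -
      let ?S = "{r. \<exists>s\<in>{tk k..Nk k}. avg B w r s < 1/2}"
      have Ss: "?S \<in> sets (run_measure B w)"
      proof -
        have "?S = {r \<in> space seq_space. \<exists>s\<in>{tk k..Nk k}. avg B w r s < 1/2}" by simp
        also have "\<dots> \<in> sets seq_space" by measurable
        finally show ?thesis by simp
      qed
      have "G K \<subseteq> space (run_measure B w) - ?S"
      proof
        fix r assume r: "r \<in> G K"
        have "\<not> avg B w r s < 1/2" if "s \<in> {tk k..Nk k}" for s
        proof -
          have "s \<ge> K" using that tk_ge[of k] k by auto
          then show ?thesis using r by (auto simp: G_def)
        qed
        then show "r \<in> space (run_measure B w) - ?S" by auto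
      qed
      then have "measure (run_measure B w) (G K) \<le> measure (run_measure B w) (space (run_measure B w) - ?S)"
        using sets.compl_sets[OF Ss] by (intro finite_measure_mono) auto
      also have "\<dots> = 1 - measure (run_measure B w) ?S" using prob_compl[OF Ss] by simp
      finally show ?thesis using Sw[of k] by simp
    qed
    show ?thesis
    proof (rule ccontr)
      assume "measure (run_measure B w) (G K) \<noteq> 0"
      then have p: "measure (run_measure B w) (G K) > 0" using measure_nonneg[of "run_measure B w" "G K"] by (simp add: less_le)
      obtain k where k: "k \<ge> K" "1 / real (Suc k) < measure (run_measure B w) (G K)"
      proof -
        obtain m :: nat where m: "1 / measure (run_measure B w) (G K) < real m" using reals_Archimedean2 by blast
        have "real m \<le> real (max m K)" by simp
        then have n: "1 / measure (run_measure B w) (G K) < real (Suc (max m K))" using m by simp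
        have "1 < real (Suc (max m K)) * measure (run_measure B w) (G K)"
          using n p by (simp add: field_simps)
        then have "1 / real (Suc (max m K)) < measure (run_measure B w) (G K)"
          by (simp add: field_simps)
        then show ?thesis by (intro that[of "max m K"]) auto
      qed
      with le[OF k(1)] show False by simp
    qed
  qed
  have "L_pos B w \<le> ereal (1/2)"
  proof (rule Lpos_le)
    fix \<eta> :: real assume eta: "\<eta> > 1/2"
    have sub: "{r. ereal \<eta> \<le> LimAvg (weight_seq B w r)} \<subseteq> (\<Union>K. G K)"
    proof
      fix r assume "r \<in> {r. ereal \<eta> \<le> LimAvg (weight_seq B w r)}"
      then have r: "ereal \<eta> \<le> liminf (\<lambda>n. ereal (avg B w r n))" by (simp add: LimAvg_avg)
      have "ereal (1/2) < ereal \<eta>" using eta by simp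
      then have "ereal (1/2) < liminf (\<lambda>n. ereal (avg B w r n))" using r by (rule less_le_trans)
      from liminf_gt_ev[OF this] obtain K where "\<forall>n\<ge>K. ereal (1/2) < ereal (avg B w r n)" by blast
      then have "r \<in> G K" by (auto simp: G_def less_imp_le)
      then show "r \<in> (\<Union>K. G K)" by blast
    qed
    have nul: "(\<Union>K. G K) \<in> null_sets (run_measure B w)"
      using G0 Gsets by (intro null_sets_UN) (auto simp: emeasure_eq_measure)
    then have "{r. ereal \<eta> \<le> LimAvg (weight_seq B w r)} \<in> null_sets (run_measure B w)"
      using null_sets_subset[OF nul _ sub] LimAvg_set_sets[of \<eta> B w] by simp
    then show "measure (run_measure B w) {r. ereal \<eta> \<le> LimAvg (weight_seq B w r)} = 0"
      by (simp add: null_sets_def emeasure_eq_measure)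
  qed
  with LB have "ereal (3/4) \<le> ereal (1/2)" by (rule order.trans)
  then show False by simp
qed


lemma integrable_prob_pmf: "integrable (measure_pmf p) (\<lambda>x. measure_pmf.prob (f x) A)"
  by (rule measure_pmf.integrable_const_bound[where B=1]) auto

lemma prob_bind_pmf:
  "measure_pmf.prob (bind_pmf p f) A = measure_pmf.expectation p (\<lambda>x. measure_pmf.prob (f x) A)"
proof -
  have "ennreal (measure_pmf.prob (bind_pmf p f) A) = emeasure (measure_pmf (bind_pmf p f)) A"
    by (simp add: measure_pmf.emeasure_eq_measure)
  also have "\<dots> = (\<integral>\<^sup>+x. emeasure (measure_pmf (f x)) A \<partial>measure_pmf p)" by simp
  also have "\<dots> = (\<integral>\<^sup>+x. ennreal (measure_pmf.prob (f x) A) \<partial>measure_pmf p)"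
    by (simp add: measure_pmf.emeasure_eq_measure)
  also have "\<dots> = ennreal (measure_pmf.expectation p (\<lambda>x. measure_pmf.prob (f x) A))"
    by (rule nn_integral_eq_integral[OF integrable_prob_pmf]) auto
  finally show ?thesis by (simp add: integral_nonneg_AE)
qed

lemma drop_app_tl:
  assumes "length xs = Suc t" "ys \<noteq> []" "ys ! 0 = last xs"
  shows "drop t (xs @ tl ys) = ys"
proof -
  obtain xs' x where xs: "xs = xs' @ [x]" using assms(1) by (cases xs rule: rev_cases) auto
  have "length xs' = t" using assms(1) xs by simp
  then show ?thesis using xs assms(2,3) by (cases ys) auto
qed

lemma path_shift_prob:
  "measure_pmf.prob (rpath B v (t + n)) {zs. \<Psi> (drop t zs)} =
   measure_pmf.expectation (rpath B v t) (\<lambda>xs. measure_pmf.prob (rpath (startat B (last xs)) (\<lambda>i. v (t + i)) n) {ys. \<Psi> ys})"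
proof -
  have "measure_pmf.prob (rpath B v (t + n)) {zs. \<Psi> (drop t zs)} =
     measure_pmf.expectation (rpath B v t) (\<lambda>xs. measure_pmf.prob (map_pmf (\<lambda>ys. xs @ tl ys) (rpath (startat B (last xs)) (\<lambda>i. v (t + i)) n)) {zs. \<Psi> (drop t zs)})"
    unfolding path_split by (rule prob_bind_pmf)
  also have "\<dots> = measure_pmf.expectation (rpath B v t) (\<lambda>xs. measure_pmf.prob (rpath (startat B (last xs)) (\<lambda>i. v (t + i)) n) {ys. \<Psi> ys})"
  proof (rule integral_cong_AE)
    show "AE xs in measure_pmf (rpath B v t). measure_pmf.prob (map_pmf (\<lambda>ys. xs @ tl ys) (rpath (startat B (last xs)) (\<lambda>i. v (t + i)) n)) {zs. \<Psi> (drop t zs)}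
        = measure_pmf.prob (rpath (startat B (last xs)) (\<lambda>i. v (t + i)) n) {ys. \<Psi> ys}"
    proof (rule AE_pmfI)
      fix xs assume xs: "xs \<in> set_pmf (rpath B v t)"
      have lx: "length xs = Suc t" using path_support[OF xs] by simp
      let ?p = "rpath (startat B (last xs)) (\<lambda>i. v (t + i)) n"
      have "(\<lambda>ys. xs @ tl ys) -` {zs. \<Psi> (drop t zs)} \<inter> set_pmf ?p = {ys. \<Psi> ys} \<inter> set_pmf ?p"
      proof (intro set_eqI iffI)
        fix ys assume ys: "ys \<in> (\<lambda>ys. xs @ tl ys) -` {zs. \<Psi> (drop t zs)} \<inter> set_pmf ?p"
        then have "ys \<in> set_pmf ?p" by auto
        from path_support[OF this] have "length ys = Suc n" "ys ! 0 = last xs" by auto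
        then have "drop t (xs @ tl ys) = ys" using lx
          by (intro drop_app_tl) auto
        then show "ys \<in> {ys. \<Psi> ys} \<inter> set_pmf ?p" using ys by simp
      next
        fix ys assume ys: "ys \<in> {ys. \<Psi> ys} \<inter> set_pmf ?p"
        then have "ys \<in> set_pmf ?p" by auto
        from path_support[OF this] have "length ys = Suc n" "ys ! 0 = last xs" by auto
        then have "drop t (xs @ tl ys) = ys" using lx
          by (intro drop_app_tl) auto
        then show "ys \<in> (\<lambda>ys. xs @ tl ys) -` {zs. \<Psi> (drop t zs)} \<inter> set_pmf ?p" using ys by simp
      qed
      note eq = this
      have "measure_pmf.prob (map_pmf (\<lambda>ys. xs @ tl ys) ?p) {zs. \<Psi> (drop t zs)} = measure_pmf.prob ?p ((\<lambda>ys. xs @ tl ys) -` {zs. \<Psi> (drop t zs)})"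
        by simp
      also have "\<dots> = measure_pmf.prob ?p ((\<lambda>ys. xs @ tl ys) -` {zs. \<Psi> (drop t zs)} \<inter> set_pmf ?p)"
        by (rule measure_Int_set_pmf[symmetric])
      also have "\<dots> = measure_pmf.prob ?p ({ys. \<Psi> ys} \<inter> set_pmf ?p)" by (simp only: eq)
      also have "\<dots> = measure_pmf.prob ?p {ys. \<Psi> ys}" by (rule measure_Int_set_pmf)
      finally show "measure_pmf.prob (map_pmf (\<lambda>ys. xs @ tl ys) ?p) {zs. \<Psi> (drop t zs)} = measure_pmf.prob ?p {ys. \<Psi> ys}" .
    qed
  qed simp_all
  finally show ?thesis .
qed


lemma prob_cong_support:
  "(\<And>x. x \<in> set_pmf p \<Longrightarrow> x \<in> A \<longleftrightarrow> x \<in> B) \<Longrightarrow> measure_pmf.prob p A = measure_pmf.prob p B"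
proof -
  assume h: "\<And>x. x \<in> set_pmf p \<Longrightarrow> x \<in> A \<longleftrightarrow> x \<in> B"
  have "A \<inter> set_pmf p = B \<inter> set_pmf p" using h by blast
  then have "measure_pmf.prob p (A \<inter> set_pmf p) = measure_pmf.prob p (B \<inter> set_pmf p)" by simp
  then show ?thesis by (simp only: measure_Int_set_pmf)
qed

lemma RM_shift_path:
  assumes inv: "\<And>r r'. (\<And>i. i \<le> n \<Longrightarrow> r i = r' i) \<Longrightarrow> \<Phi> r = \<Phi> r'"
  shows "measure (run_measure B v) {r. \<Phi> (\<lambda>i. r (t + i))} =
    measure_pmf.expectation (rpath B v t) (\<lambda>xs. measure (run_measure (startat B (last xs)) (\<lambda>i. v (t + i))) {r. \<Phi> r})"
proof -
  have "measure (run_measure B v) {r. \<Phi> (\<lambda>i. r (t + i))} = measure_pmf.prob (rpath B v (t + n)) {zs. \<Phi> (\<lambda>i. zs ! (t + i))}"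
    by (rule RM_fh) (rule inv, auto)
  also have "\<dots> = measure_pmf.prob (rpath B v (t + n)) {zs. \<Phi> (\<lambda>i. drop t zs ! i)}"
  proof (rule prob_cong_support)
    fix zs assume "zs \<in> set_pmf (rpath B v (t + n))"
    then have "length zs = Suc (t + n)" using path_support by blast
    then have "(\<lambda>i. drop t zs ! i) = (\<lambda>i. zs ! (t + i))" by (auto simp: nth_drop)
    then show "zs \<in> {zs. \<Phi> (\<lambda>i. zs ! (t + i))} \<longleftrightarrow> zs \<in> {zs. \<Phi> (\<lambda>i. drop t zs ! i)}" by simp
  qed
  also have "\<dots> = measure_pmf.expectation (rpath B v t) (\<lambda>xs. measure_pmf.prob (rpath (startat B (last xs)) (\<lambda>i. v (t + i)) n) {ys. \<Phi> (\<lambda>i. ys ! i)})"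
    by (rule path_shift_prob)
  also have "\<dots> = measure_pmf.expectation (rpath B v t) (\<lambda>xs. measure (run_measure (startat B (last xs)) (\<lambda>i. v (t + i))) {r. \<Phi> r})"
  proof -
    have "measure_pmf.prob (rpath (startat B (last xs)) (\<lambda>i. v (t + i)) n) {ys. \<Phi> (\<lambda>i. ys ! i)} =
      measure (run_measure (startat B (last xs)) (\<lambda>i. v (t + i))) {r. \<Phi> r}" for xs
      by (rule RM_fh[symmetric]) (rule inv)
    then show ?thesis by simp
  qed
  finally show ?thesis .
qed

lemma RM_state_pos:
  assumes "xs \<in> set_pmf (rpath B v t)"
  shows "0 < measure (run_measure B v) {r. r t = last xs}"
proof -
  have l: "length xs = Suc t" using path_support[OF assms] by simp
  have "measure (run_measure B v) {r. r t = last xs} = measure_pmf.prob (rpath B v t) {ys. ys ! t = last xs}"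
    by (rule RM_fh) auto
  also have "\<dots> > 0" using assms l by (intro measure_pmf_posI) (auto, subst last_conv_nth, auto)
  finally show ?thesis .
qed

lemma markov_le:
  assumes inv: "\<And>r r'. (\<And>i. i \<le> n \<Longrightarrow> r i = r' i) \<Longrightarrow> \<Phi> r = \<Phi> r'"
    and bound: "\<And>q. 0 < measure (run_measure B v) {r. r t = q} \<Longrightarrow> measure (run_measure (startat B q) (\<lambda>i. v (t + i))) {r. \<Phi> r} \<le> \<delta>"
  shows "measure (run_measure B v) {r. \<Phi> (\<lambda>i. r (t + i))} \<le> \<delta>"
proof -
  have "measure_pmf.expectation (rpath B v t) (\<lambda>xs. measure (run_measure (startat B (last xs)) (\<lambda>i. v (t + i))) {r. \<Phi> r}) \<le> \<delta>"
  proof (rule measure_pmf.integral_le_const)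
    show "integrable (measure_pmf (rpath B v t)) (\<lambda>xs. measure (run_measure (startat B (last xs)) (\<lambda>i. v (t + i))) {r. \<Phi> r})"
    proof (rule measure_pmf.integrable_const_bound[where B=1])
      show "AE x in measure_pmf (rpath B v t). norm (measure (run_measure (startat B (last x)) (\<lambda>i. v (t + i))) {r. \<Phi> r}) \<le> 1"
      proof (rule AE_pmfI)
        fix xs
        interpret prob_space "run_measure (startat B (last xs)) (\<lambda>i. v (t + i))" by (rule RM_prob)
        show "norm (measure (run_measure (startat B (last xs)) (\<lambda>i. v (t + i))) {r. \<Phi> r}) \<le> 1" by simp
      qed
    qed simp
    show "AE x in measure_pmf (rpath B v t). measure (run_measure (startat B (last x)) (\<lambda>i. v (t + i))) {r. \<Phi> r} \<le> \<delta>"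
      by (rule AE_pmfI) (rule bound[OF RM_state_pos])
  qed
  moreover have "measure (run_measure B v) {r. \<Phi> (\<lambda>i. r (t + i))} =
    measure_pmf.expectation (rpath B v t) (\<lambda>xs. measure (run_measure (startat B (last xs)) (\<lambda>i. v (t + i))) {r. \<Phi> r})"
    by (rule RM_shift_path) (rule inv)
  ultimately show ?thesis by simp
qed

lemma markov_eq:
  assumes inv: "\<And>r r'. (\<And>i. i \<le> n \<Longrightarrow> r i = r' i) \<Longrightarrow> \<Phi> r = \<Phi> r'"
  shows "measure (run_measure B v) {r. r t = q \<and> \<Phi> (\<lambda>i. r (t + i))} =
    measure (run_measure B v) {r. r t = q} * measure (run_measure (startat B q) (\<lambda>i. v (t + i))) {r. \<Phi> r}"
proof -
  let ?P = "measure (run_measure (startat B q) (\<lambda>i. v (t + i))) {r. \<Phi> r}"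
  have inv2: "(r 0 = q \<and> \<Phi> r) = (r' 0 = q \<and> \<Phi> r')" if "\<And>i. i \<le> n \<Longrightarrow> r i = r' i" for r r'
    using inv[of r r', OF that] that[of 0] by simp
  have s1: "{r. \<Phi> r} \<in> sets seq_space" by (rule fh_sets) (rule inv)
  have s2: "{r. r 0 = q \<and> \<Phi> r} \<in> sets seq_space" by (rule fh_sets) (rule inv2)
  have s0: "{r. r 0 \<noteq> a} \<in> sets seq_space" for a :: nat by (rule fh_sets[where n=0]) auto
  have "measure (run_measure B v) {r. r t = q \<and> \<Phi> (\<lambda>i. r (t + i))} =
    measure_pmf.expectation (rpath B v t) (\<lambda>xs. measure (run_measure (startat B (last xs)) (\<lambda>i. v (t + i))) {r. r 0 = q \<and> \<Phi> r})"
  proof -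
    have "measure (run_measure B v) {r. (\<lambda>r. r 0 = q \<and> \<Phi> r) (\<lambda>i. r (t + i))} =
      measure_pmf.expectation (rpath B v t) (\<lambda>xs. measure (run_measure (startat B (last xs)) (\<lambda>i. v (t + i))) {r. (\<lambda>r. r 0 = q \<and> \<Phi> r) r})"
      by (rule RM_shift_path[where \<Phi>="\<lambda>r. r 0 = q \<and> \<Phi> r" and n=n]) (rule inv2)
    then show ?thesis by simp
  qed
  also have "\<dots> = measure_pmf.expectation (rpath B v t) (\<lambda>xs. indicator {xs. last xs = q} xs * ?P)"
  proof (rule integral_cong_AE)
    show "AE xs in measure_pmf (rpath B v t). measure (run_measure (startat B (last xs)) (\<lambda>i. v (t + i))) {r. r 0 = q \<and> \<Phi> r} =
       indicator {xs. last xs = q} xs * ?P"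
    proof (rule AE_pmfI)
      fix xs
      interpret p: prob_space "run_measure (startat B (last xs)) (\<lambda>i. v (t + i))" by (rule RM_prob)
      have r0: "measure (run_measure (startat B (last xs)) (\<lambda>i. v (t + i))) {r. r 0 \<noteq> last xs} = 0"
      proof -
        have "measure (run_measure (startat B (last xs)) (\<lambda>i. v (t + i))) {r. r 0 \<noteq> last xs} =
            measure_pmf.prob (rpath (startat B (last xs)) (\<lambda>i. v (t + i)) 0) {ys. ys ! 0 \<noteq> last xs}"
          by (rule RM_fh) auto
        also have "\<dots> = 0" by (simp add: measure_pmf_zero_iff)
        finally show ?thesis .
      qed
      show "measure (run_measure (startat B (last xs)) (\<lambda>i. v (t + i))) {r. r 0 = q \<and> \<Phi> r} =
         indicator {xs. last xs = q} xs * ?P"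
      proof (cases "last xs = q")
        case True
        have "measure (run_measure (startat B (last xs)) (\<lambda>i. v (t + i))) {r. r 0 = q \<and> \<Phi> r} = measure (run_measure (startat B (last xs)) (\<lambda>i. v (t + i))) {r. \<Phi> r}"
        proof (rule measure_eq_AE)
          have "{r. r 0 \<noteq> last xs} \<in> null_sets (run_measure (startat B (last xs)) (\<lambda>i. v (t + i)))"
            using r0 s0[of "last xs"] by (simp add: p.emeasure_eq_measure null_sets_def)
          then have "AE r in run_measure (startat B (last xs)) (\<lambda>i. v (t + i)). r \<notin> {r. r 0 \<noteq> last xs}"
            by (rule AE_not_in)
          then show "AE r in run_measure (startat B (last xs)) (\<lambda>i. v (t + i)). (r \<in> {r. r 0 = q \<and> \<Phi> r}) = (r \<in> {r. \<Phi> r})"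
            using True by auto
        next
          show "{r. r 0 = q \<and> \<Phi> r} \<in> sets (run_measure (startat B (last xs)) (\<lambda>i. v (t + i)))"
            using s2 by simp
          show "{r. \<Phi> r} \<in> sets (run_measure (startat B (last xs)) (\<lambda>i. v (t + i)))"
            using s1 by simp
        qed
        then show ?thesis using True by simp
      next
        case False
        have "measure (run_measure (startat B (last xs)) (\<lambda>i. v (t + i))) {r. r 0 = q \<and> \<Phi> r}
           \<le> measure (run_measure (startat B (last xs)) (\<lambda>i. v (t + i))) {r. r 0 \<noteq> last xs}"
          using False s0[of "last xs"] by (intro p.finite_measure_mono) auto
        then show ?thesis using False r0 measure_nonneg[of "run_measure (startat B (last xs)) (\<lambda>i. v (t + i))" "{r. r 0 = q \<and> \<Phi> r}"] by simp
      qed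
    qed
  qed simp_all
  also have "\<dots> = measure_pmf.prob (rpath B v t) {xs. last xs = q} * ?P" by simp
  also have "measure_pmf.prob (rpath B v t) {xs. last xs = q} = measure_pmf.prob (rpath B v t) {xs. xs ! t = q}"
  proof (rule prob_cong_support)
    fix xs assume "xs \<in> set_pmf (rpath B v t)"
    then have "length xs = Suc t" using path_support by blast
    then have "last xs = xs ! t" by (subst last_conv_nth) auto
    then show "xs \<in> {xs. last xs = q} \<longleftrightarrow> xs \<in> {xs. xs ! t = q}" by simp
  qed
  also have "\<dots> = measure (run_measure B v) {r. r t = q}"
    by (rule RM_fh[symmetric]) auto
  finally show ?thesis .
qed


lemma LimAvg_zero: "(\<And>i. x i = 0) \<Longrightarrow> LimAvg x = 0"
  by (simp add: LimAvg_def zero_ereal_def[symmetric] Liminf_const)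

lemma LimAvg_nonneg: "(\<And>i. 0 \<le> x i) \<Longrightarrow> 0 \<le> LimAvg x"
  unfolding LimAvg_def by (intro Liminf_bounded) (auto intro!: always_eventually divide_nonneg_nonneg sum_nonneg)

lemma LimAvg_le1: "(\<And>i. x i \<le> 1) \<Longrightarrow> LimAvg x \<le> 1"
  unfolding LimAvg_def
proof (intro Liminf_le)
  assume h: "\<And>i. x i \<le> 1"
  show "\<forall>\<^sub>F n in sequentially. ereal ((\<Sum>i<n. x i) / real n) \<le> 1"
  proof (intro always_eventually allI)
    fix n
    have "(\<Sum>i<n. x i) \<le> (\<Sum>i<n. 1)" using h by (intro sum_mono) auto
    then show "ereal ((\<Sum>i<n. x i) / real n) \<le> 1" by (cases "n = 0") (auto simp: field_simps)
  qed
qed simp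

lemma LimAvg_ev1:
  assumes "\<And>i. i \<ge> j \<Longrightarrow> x i = 1" "\<And>i. 0 \<le> x i" "\<eta> < 1"
  shows "ereal \<eta> \<le> LimAvg x"
  unfolding LimAvg_def
proof (rule Liminf_bounded, unfold eventually_sequentially)
  obtain n0 :: nat where n0: "real j / (1 - \<eta>) < real n0" using reals_Archimedean2 by blast
  show "\<exists>N. \<forall>n\<ge>N. ereal \<eta> \<le> ereal ((\<Sum>i<n. x i) / real n)"
  proof (intro exI[of _ "max n0 (Suc j)"] allI impI)
    fix n assume n: "max n0 (Suc j) \<le> n"
    have "real n - real j \<le> (\<Sum>i<n. x i)"
    proof -
      have "real n - real j = (\<Sum>i\<in>{j..<n}. 1)" using n by simp
      also have "\<dots> = (\<Sum>i\<in>{j..<n}. x i)" using assms(1) by (intro sum.cong) auto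
      also have "\<dots> \<le> (\<Sum>i<n. x i)" using assms(2) by (intro sum_mono2) auto
      finally show ?thesis .
    qed
    moreover have "\<eta> * real n \<le> real n - real j"
    proof -
      have "real j < (1 - \<eta>) * real n0" using n0 assms(3) by (simp add: field_simps)
      also have "\<dots> \<le> (1 - \<eta>) * real n" using n assms(3) by (intro mult_left_mono) auto
      finally show ?thesis by (simp add: algebra_simps)
    qed
    moreover have "real n > 0" using n by simp
    ultimately show "ereal \<eta> \<le> ereal ((\<Sum>i<n. x i) / real n)" by (simp add: field_simps)
  qed
qed

definition A1 :: "nat pwa" where
  "A1 = \<lparr>pstates = {0,1}, pinit = return_pmf 0,
     ptrans = (\<lambda>q \<sigma>. if q = 0 \<and> \<sigma> = 1 then pmf_of_set {0,1} else return_pmf q),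
     pweight = (\<lambda>q \<sigma> q'. if q = 1 then 1 else 0)\<rparr>"

lemma wf_A1: "wf_pwa {0,1} A1"
  by (auto simp: wf_pwa_def A1_def)

lemma ws_A1: "weight_seq A1 w r i = (if r i = 1 then 1 else 0)"
  by (simp add: weight_seq_def A1_def)

lemma A1_support:
  assumes "xs \<in> set_pmf (rpath A1 w n)"
  shows "(\<forall>i\<le>n. xs ! i \<in> {0,1}) \<and> (\<forall>i<n. xs ! i = 1 \<longrightarrow> xs ! Suc i = 1)"
proof -
  from path_support[OF assms] have s0: "xs ! 0 = 0"
    and sS: "\<And>i. i < n \<Longrightarrow> xs ! Suc i \<in> set_pmf (ptrans A1 (xs ! i) (w i))"
    by (auto simp: A1_def)
  have step: "xs ! Suc i \<in> {0,1} \<union> {xs ! i}" "xs ! i = 1 \<longrightarrow> xs ! Suc i = 1" if "i < n" for i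
    using sS[OF that] by (auto simp: A1_def split: if_splits)
  have "xs ! i \<in> {0,1}" if "i \<le> n" for i
    using that
  proof (induction i)
    case 0 then show ?case using s0 by simp
  next
    case (Suc i) then show ?case using step(1)[of i] by auto
  qed
  then show ?thesis using step(2) by auto
qed

definition Good1 :: "(nat \<Rightarrow> nat) set" where
  "Good1 = {r. \<forall>i. r i \<in> {0,1} \<and> (r i = 1 \<longrightarrow> r (Suc i) = 1)}"

lemma AE_Good1: "AE r in run_measure A1 w. r \<in> Good1"
proof -
  interpret prob_space "run_measure A1 w" by (rule RM_prob)
  define Bad :: "nat \<Rightarrow> (nat \<Rightarrow> nat) set" where "Bad n = {r. \<not> ((\<forall>i\<le>n. r i \<in> {0,1}) \<and> (\<forall>i<n. r i = 1 \<longrightarrow> r (Suc i) = 1))}" for n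
  have inv: "\<And>r r'. (\<And>i. i \<le> n \<Longrightarrow> r i = r' i) \<Longrightarrow>
      (\<not> ((\<forall>i\<le>n. r i \<in> {0,1}) \<and> (\<forall>i<n. r i = 1 \<longrightarrow> r (Suc i) = 1))) =
      (\<not> ((\<forall>i\<le>n. r' i \<in> {0,1}) \<and> (\<forall>i<n. r' i = 1 \<longrightarrow> r' (Suc i) = 1)))" for n
    by (metis Suc_leI less_imp_le)
  have Bs: "Bad n \<in> sets (run_measure A1 w)" for n
    unfolding Bad_def RM_sets by (rule fh_sets) (rule inv)
  have B0: "measure (run_measure A1 w) (Bad n) = 0" for n
  proof -
    have "measure (run_measure A1 w) (Bad n) = measure_pmf.prob (rpath A1 w n)
        {xs. \<not> ((\<forall>i\<le>n. xs ! i \<in> {0,1}) \<and> (\<forall>i<n. xs ! i = 1 \<longrightarrow> xs ! Suc i = 1))}"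
      unfolding Bad_def by (rule RM_fh) (rule inv)
    also have "\<dots> = 0"
    proof -
      have "set_pmf (rpath A1 w n) \<inter> {xs. \<not> ((\<forall>i\<le>n. xs ! i \<in> {0,1}) \<and> (\<forall>i<n. xs ! i = 1 \<longrightarrow> xs ! Suc i = 1))} = {}"
        using A1_support[of _ w n] by blast
      then show ?thesis by (simp only: measure_pmf_zero_iff)
    qed
    finally show ?thesis .
  qed
  have "(\<Union>n. Bad n) \<in> null_sets (run_measure A1 w)"
    using Bs B0 by (intro null_sets_UN) (auto simp: emeasure_eq_measure)
  moreover have "UNIV - Good1 \<subseteq> (\<Union>n. Bad n)"
  proof
    fix r assume "r \<in> UNIV - Good1"
    then obtain i where i: "\<not> (r i \<in> {0,1} \<and> (r i = 1 \<longrightarrow> r (Suc i) = 1))" by (auto simp: Good1_def)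
    have "\<not> ((\<forall>k\<le>Suc i. r k \<in> {0,1}) \<and> (\<forall>k<Suc i. r k = 1 \<longrightarrow> r (Suc k) = 1))"
    proof
      assume h: "(\<forall>k\<le>Suc i. r k \<in> {0,1}) \<and> (\<forall>k<Suc i. r k = 1 \<longrightarrow> r (Suc k) = 1)"
      have "r i \<in> {0,1}" using h le_SucI[OF order_refl] by blast
      moreover have "r i = 1 \<longrightarrow> r (Suc i) = 1" using h lessI by blast
      ultimately show False using i by blast
    qed
    then have "r \<in> Bad (Suc i)" unfolding Bad_def by blast
    then show "r \<in> (\<Union>n. Bad n)" by blast
  qed
  ultimately show ?thesis
    by (intro AE_I[where N="\<Union>n. Bad n"]) (auto simp: emeasure_eq_measure null_sets_def)
qed

lemma Good1_up:
  assumes "r \<in> Good1" "r j = 1" "j \<le> i" shows "r i = 1"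
  using assms(3)
proof (induction i rule: dec_induct)
  case base then show ?case using assms(2) by simp
next
  case (step i) then show ?case using assms(1) by (auto simp: Good1_def)
qed

definition P1 where "P1 w n = prefix_prob A1 w n (\<lambda>_. 0)"

lemma P1_Suc: "P1 w (Suc n) = P1 w n * (if w n = 1 then 1/2 else 1)"
  by (simp add: P1_def prefix_prob_Suc A1_def)

lemma P1_0: "P1 w 0 = 1"
  by (simp add: P1_def prefix_prob_def A1_def)

lemma P1_pos: "P1 w n > 0"
  by (induction n) (auto simp: P1_0 P1_Suc)

lemma P1_le1: "P1 w n \<le> 1"
  by (induction n) (auto simp: P1_0 P1_Suc intro: order.trans[OF mult_left_le])

lemma P1_mono: "m \<le> n \<Longrightarrow> P1 w n \<le> P1 w m"
proof (induction n rule: dec_induct)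
  case (step n)
  have "P1 w (Suc n) \<le> P1 w n" using P1_pos[of w n] by (auto simp: P1_Suc)
  then show ?case using step by simp
qed simp

lemma Z_eq: "{r. \<forall>i. r i = 0} = (\<Inter>n. cyl n (\<lambda>_. 0))"
  by (auto simp: cyl_alt)

lemma measure_Z_le: "measure (run_measure A1 w) {r. \<forall>i. r i = 0} \<le> P1 w n"
proof -
  interpret prob_space "run_measure A1 w" by (rule RM_prob)
  have "{r. \<forall>i. r i = 0} \<subseteq> cyl n (\<lambda>_. 0)" by (auto simp: cyl_alt)
  then have "measure (run_measure A1 w) {r. \<forall>i. r i = 0} \<le> measure (run_measure A1 w) (cyl n (\<lambda>_. 0))"
    by (intro finite_measure_mono) auto
  then show ?thesis by (simp add: RM_cyl P1_def)
qed


lemma ereal_ge1_from_dense: "(\<And>\<eta>. \<eta> < 1 \<Longrightarrow> ereal \<eta> \<le> x) \<Longrightarrow> 1 \<le> x"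
proof (cases x)
  case (real x')
  assume h: "\<And>\<eta>. \<eta> < 1 \<Longrightarrow> ereal \<eta> \<le> x"
  show ?thesis
  proof (rule ccontr)
    assume "\<not> 1 \<le> x"
    then have "x' < 1" using real by simp
    then have "ereal ((x' + 1) / 2) \<le> x" by (intro h) simp
    then show False using real \<open>x' < 1\<close> by simp
  qed
next
  case MInf
  assume h: "\<And>\<eta>. \<eta> < 1 \<Longrightarrow> ereal \<eta> \<le> x"
  from h[of 0] MInf show ?thesis by simp
qed simp

lemma LimAvg_A1_le1: "LimAvg (weight_seq A1 w r) \<le> 1"
  by (rule LimAvg_le1) (simp add: ws_A1)

lemma LimAvg_A1_ge0: "0 \<le> LimAvg (weight_seq A1 w r)"
  by (rule LimAvg_nonneg) (simp add: ws_A1)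

lemma L_A1_inf:
  assumes inf: "\<And>N. \<exists>i\<ge>N. w i = 1"
  shows "L_as A1 w = 1"
proof (rule antisym)
  interpret prob_space "run_measure A1 w" by (rule RM_prob)
  show "L_as A1 w \<le> 1"
  proof -
    have "L_as A1 w \<le> ereal 1"
    proof (rule Las_le)
      fix \<eta> :: real assume "\<eta> > 1"
      have "\<not> ereal \<eta> \<le> LimAvg (weight_seq A1 w r)" for r
      proof
        assume "ereal \<eta> \<le> LimAvg (weight_seq A1 w r)"
        from order.trans[OF this LimAvg_A1_le1] have "ereal \<eta> \<le> 1" .
        with \<open>\<eta> > 1\<close> show False by simp
      qed
      then have "{r. ereal \<eta> \<le> LimAvg (weight_seq A1 w r)} = {}" by blast
      then show "measure (run_measure A1 w) {r. ereal \<eta> \<le> LimAvg (weight_seq A1 w r)} \<noteq> 1" by simp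
    qed
    then show ?thesis by (simp add: one_ereal_def)
  qed
  have small: "\<exists>n. P1 w n \<le> (1/2) ^ K" for K
  proof (induction K)
    case 0 then show ?case using P1_le1 by auto
  next
    case (Suc K)
    then obtain n where n: "P1 w n \<le> (1/2) ^ K" by blast
    obtain i where i: "i \<ge> n" "w i = 1" using inf by blast
    have "P1 w (Suc i) = P1 w i / 2" using i by (simp add: P1_Suc)
    also have "\<dots> \<le> P1 w n / 2" using P1_mono[OF i(1)] by simp
    also have "\<dots> \<le> (1/2) ^ Suc K" using n by simp
    finally show ?case by blast
  qed
  have Z0: "measure (run_measure A1 w) {r. \<forall>i. r i = 0} = 0"
  proof (rule ccontr)
    assume "measure (run_measure A1 w) {r. \<forall>i. r i = 0} \<noteq> 0"
    then have p: "measure (run_measure A1 w) {r. \<forall>i. r i = 0} > 0"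
      using measure_nonneg[of "run_measure A1 w" "{r. \<forall>i. r i = 0}"] by (simp add: less_le)
    obtain K where K: "(1/2::real) ^ K < measure (run_measure A1 w) {r. \<forall>i. r i = 0}"
      using real_arch_pow_inv[OF p, of "1/2"] by auto
    obtain n where "P1 w n \<le> (1/2) ^ K" using small by blast
    with measure_Z_le[of w n] K show False by simp
  qed
  have Zs: "{r. \<forall>i. r i = 0} \<in> sets (run_measure A1 w)"
    unfolding Z_eq by (simp add: sets.countable_INT)
  have AEnZ: "AE r in run_measure A1 w. r \<notin> {r. \<forall>i. r i = 0}"
    by (rule AE_not_in) (use Z0 Zs in \<open>auto simp: null_sets_def emeasure_eq_measure\<close>)
  have "ereal \<eta> \<le> L_as A1 w" if eta: "\<eta> < 1" for \<eta>
  proof (rule Las_ge)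
    have "AE r in run_measure A1 w. r \<in> {r. ereal \<eta> \<le> LimAvg (weight_seq A1 w r)}"
      using AE_Good1[of w] AEnZ
    proof eventually_elim
      case (elim r)
      then obtain j where j: "r j \<noteq> 0" by auto
      moreover have "r j \<in> {0,1}" using elim(1) unfolding Good1_def by blast
      ultimately have rj: "r j = 1" by simp
      have "ereal \<eta> \<le> LimAvg (weight_seq A1 w r)"
        by (rule LimAvg_ev1[where j=j]) (use Good1_up[OF elim(1) rj] eta in \<open>auto simp: ws_A1\<close>)
      then show ?case by simp
    qed
    then show "measure (run_measure A1 w) {r. ereal \<eta> \<le> LimAvg (weight_seq A1 w r)} = 1"
      by (subst prob_eq_1) (auto simp: LimAvg_set_sets)
  qed
  then show "1 \<le> L_as A1 w" by (rule ereal_ge1_from_dense)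
qed

lemma P1_const:
  assumes h: "\<And>i. i \<ge> m \<Longrightarrow> w i \<noteq> 1" and mn: "m \<le> n" shows "P1 w n = P1 w m"
  using mn
proof (induction n rule: dec_induct)
  case (step n) then show ?case using h[of n] by (simp add: P1_Suc)
qed simp

lemma L_A1_fin:
  assumes fin: "\<And>i. i \<ge> m \<Longrightarrow> w i = 0"
  shows "L_as A1 w = 0"
proof (rule antisym)
  interpret prob_space "run_measure A1 w" by (rule RM_prob)
  show "0 \<le> L_as A1 w"
  proof -
    have "ereal 0 \<le> L_as A1 w"
    proof (rule Las_ge)
      have "{r. ereal 0 \<le> LimAvg (weight_seq A1 w r)} = UNIV" using LimAvg_A1_ge0 by (auto simp: zero_ereal_def)
      then show "measure (run_measure A1 w) {r. ereal 0 \<le> LimAvg (weight_seq A1 w r)} = 1"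
        using prob_space by simp
    qed
    then show ?thesis by (simp add: zero_ereal_def)
  qed
  have Zs: "{r. \<forall>i. r i = 0} \<in> sets (run_measure A1 w)"
    unfolding Z_eq by (simp add: sets.countable_INT)
  have lim: "(\<lambda>n. measure (run_measure A1 w) (cyl n (\<lambda>_. 0))) \<longlonglongrightarrow> measure (run_measure A1 w) (\<Inter>n. cyl n (\<lambda>_. 0))"
  proof (rule Lim_measure_decseq)
    show "range (\<lambda>n. cyl n (\<lambda>_. 0)) \<subseteq> sets (run_measure A1 w)" by (auto simp: cyl_sets)
    show "decseq (\<lambda>n. cyl n (\<lambda>_. 0::nat))" by (auto simp: decseq_def cyl_alt)
  qed simp
  have ev: "eventually (\<lambda>n. measure (run_measure A1 w) (cyl n (\<lambda>_. 0)) = P1 w m) sequentially"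
    unfolding eventually_sequentially
    by (intro exI[of _ m] allI impI) (auto simp: RM_cyl P1_def[symmetric] intro!: P1_const dest: fin)
  have "measure (run_measure A1 w) (\<Inter>n. cyl n (\<lambda>_. 0)) = P1 w m"
    using LIMSEQ_unique[OF lim tendsto_eventually[OF ev]] .
  then have Zm: "measure (run_measure A1 w) {r. \<forall>i. r i = 0} = P1 w m" by (simp add: Z_eq)
  have "L_as A1 w \<le> ereal 0"
  proof (rule Las_le)
    fix \<eta> :: real assume eta: "\<eta> > 0"
    have sub: "{r. ereal \<eta> \<le> LimAvg (weight_seq A1 w r)} \<subseteq> space (run_measure A1 w) - {r. \<forall>i. r i = 0}"
    proof
      fix r assume r: "r \<in> {r. ereal \<eta> \<le> LimAvg (weight_seq A1 w r)}"
      show "r \<in> space (run_measure A1 w) - {r. \<forall>i. r i = 0}"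
      proof (rule ccontr)
        assume "r \<notin> space (run_measure A1 w) - {r. \<forall>i. r i = 0}"
        then have "\<forall>i. r i = 0" by simp
        then have "LimAvg (weight_seq A1 w r) = 0" by (intro LimAvg_zero) (simp add: ws_A1)
        then show False using r eta by (simp add: zero_ereal_def)
      qed
    qed
    have "measure (run_measure A1 w) {r. ereal \<eta> \<le> LimAvg (weight_seq A1 w r)} \<le> measure (run_measure A1 w) (space (run_measure A1 w) - {r. \<forall>i. r i = 0})"
      using sub sets.compl_sets[OF Zs] by (intro finite_measure_mono) auto
    also have "\<dots> = 1 - P1 w m" using prob_compl[OF Zs] Zm by simp
    also have "\<dots> < 1" using P1_pos[of w m] by simp
    finally show "measure (run_measure A1 w) {r. ereal \<eta> \<le> LimAvg (weight_seq A1 w r)} \<noteq> 1" by simp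
  qed
  then show "L_as A1 w \<le> 0" by (simp add: zero_ereal_def)
qed


lemma liminf_ge_half:
  fixes X :: "nat \<Rightarrow> real"
  assumes "\<And>\<epsilon>. \<epsilon> > 0 \<Longrightarrow> \<exists>N. \<forall>m\<ge>N. 1/2 - \<epsilon> \<le> X m"
  shows "ereal (1/2) \<le> liminf (\<lambda>m. ereal (X m))"
proof (subst le_Liminf_iff, intro allI impI)
  fix y :: ereal assume y: "y < ereal (1/2)"
  show "\<forall>\<^sub>F m in sequentially. y < ereal (X m)"
  proof (cases y)
    case (real y')
    then have "y' < 1/2" using y by simp
    then obtain N where N: "\<forall>m\<ge>N. 1/2 - (1/2 - y')/2 \<le> X m" using assms[of "(1/2 - y')/2"] by auto
    show ?thesis unfolding eventually_sequentially
    proof (intro exI[of _ N] allI impI)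
      fix m assume "m \<ge> N"
      then have "1/2 - (1/2 - y')/2 \<le> X m" using N by blast
      then have "y' < X m" using \<open>y' < 1/2\<close> by (simp add: field_simps)
      then show "y < ereal (X m)" using real by simp
    qed
  next
    case MInf then show ?thesis by simp
  next
    case PInf then show ?thesis using y by simp
  qed
qed

lemma block_index:
  fixes t :: "nat \<Rightarrow> nat"
  assumes tmono: "\<And>k. t k < t (Suc k)" and m: "t k0 \<le> m"
  shows "\<exists>k\<ge>k0. t k \<le> m \<and> m < t (Suc k)"
proof -
  have tge: "t k \<ge> k" for k by (induction k) (auto intro: Suc_leI le_less_trans[OF _ tmono])
  have ex: "\<exists>k. m < t k" using tge[of "Suc m"] by (intro exI[of _ "Suc m"]) simp
  define k' where "k' = (LEAST k. m < t k)"
  have k': "m < t k'" unfolding k'_def using LeastI_ex[OF ex] .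
  have mono: "i \<le> j \<Longrightarrow> t i \<le> t j" for i j
    by (induction j rule: dec_induct) (auto intro: order.trans less_imp_le[OF tmono])
  have "k' > k0"
  proof (rule ccontr)
    assume "\<not> k' > k0"
    then have "t k' \<le> t k0" using mono by simp
    with k' m show False by simp
  qed
  then obtain k where k: "k' = Suc k" "k \<ge> k0" by (cases k') auto
  have "\<not> m < t k" using not_less_Least[of k "\<lambda>k. m < t k"] k unfolding k'_def by simp
  then show ?thesis using k k' by (intro exI[of _ k]) auto
qed

lemma diag_arith:
  fixes x :: "nat \<Rightarrow> real" and t n C :: "nat \<Rightarrow> nat" and WN K :: nat
  assumes tS: "\<And>k. t (Suc k) = t k + n k + 1"
    and nD: "\<And>k. real (n k) \<ge> real (k + 2) * (\<Sum>j\<le>Suc k. real (C j + WN + 1))"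
    and xb: "\<And>i. \<bar>x i\<bar> \<le> real WN"
    and good: "\<And>k s. k \<ge> K \<Longrightarrow> s \<le> n k \<Longrightarrow> real s / 2 - real (C k) \<le> (\<Sum>i<t k + s. x i) - (\<Sum>i<t k. x i)"
  shows "ereal (1/2) \<le> liminf (\<lambda>m. ereal ((\<Sum>i<m. x i) / real m))"
proof -
  define S where "S m = (\<Sum>i<m. x i)" for m
  define D where "D k = (\<Sum>j\<le>k. real (C j + WN + 1))" for k
  have tmono: "t k < t (Suc k)" for k using tS by simp
  have Dnn: "0 \<le> D k" for k unfolding D_def by (intro sum_nonneg) auto
  have claim: "S (t k) - S (t K) \<ge> (real (t k) - real (t K)) / 2 - (\<Sum>j\<in>{K..<k}. real (C j + WN + 1))"
    if "K \<le> k" for k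
    using that
  proof (induction k rule: dec_induct)
    case base then show ?case by simp
  next
    case (step k)
    have g: "real (n k) / 2 - real (C k) \<le> S (t k + n k) - S (t k)"
      using good[OF step(1) order_refl] by (simp add: S_def)
    have x: "S (t (Suc k)) = S (t k + n k) + x (t k + n k)" by (simp add: S_def tS)
    have xl: "x (t k + n k) \<ge> - real WN" using xb[of "t k + n k"] by linarith
    have sum: "(\<Sum>j\<in>{K..<Suc k}. real (C j + WN + 1)) = (\<Sum>j\<in>{K..<k}. real (C j + WN + 1)) + real (C k + WN + 1)"
      using step(1) by (simp add: sum.atLeastLessThan_Suc)
    show ?case using step(3) g x xl sum tS[of k] by (simp add: field_simps)
  qed
  have claim2: "S (t k + s) - S (t K) \<ge> (real (t k + s) - real (t K)) / 2 - D k" if "K \<le> k" "s \<le> n k" for k s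
  proof -
    have g: "real s / 2 - real (C k) \<le> S (t k + s) - S (t k)"
      using good[OF that] by (simp add: S_def)
    have "(\<Sum>j\<in>{K..<k}. real (C j + WN + 1)) + real (C k) \<le> (\<Sum>j\<in>{K..<Suc k}. real (C j + WN + 1))"
      using that by (simp add: sum.atLeastLessThan_Suc)
    also have "\<dots> \<le> D k" unfolding D_def by (intro sum_mono2) auto
    finally have "(\<Sum>j\<in>{K..<k}. real (C j + WN + 1)) + real (C k) \<le> D k" .
    then show ?thesis using claim[OF that(1)] g by (simp add: field_simps)
  qed
  have Dt: "real (k + 1) * D k \<le> real (t k)" if kge: "k \<ge> 1" for k
  proof -
    have "k = Suc (k - 1)" using kge by simp
    then obtain k' where k: "k = Suc k'" by blast
    have "real (k + 1) * D k = real (k' + 2) * D (Suc k')" using k by simp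
    also have "\<dots> \<le> real (n k')" using nD[of k'] by (simp add: D_def)
    also have "\<dots> \<le> real (t k)" using tS[of k'] k by simp
    finally show ?thesis .
  qed
  show ?thesis
  proof (rule liminf_ge_half)
    fix \<epsilon> :: real assume e: "\<epsilon> > 0"
    define c where "c = \<bar>S (t K)\<bar> + real (t K)"
    obtain k1 :: nat where k1: "2 / \<epsilon> < real k1" using reals_Archimedean2 by blast
    define k0 where "k0 = max k1 (max K 1)"
    obtain M1 :: nat where M1: "2 * c / \<epsilon> < real M1" using reals_Archimedean2 by blast
    define N where "N = max (t k0) (max M1 1)"
    show "\<exists>N. \<forall>m\<ge>N. 1/2 - \<epsilon> \<le> (\<Sum>i<m. x i) / real m"
    proof (intro exI[of _ N] allI impI)
      fix m assume m: "N \<le> m"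
      then have "t k0 \<le> m" by (simp add: N_def)
      from block_index[OF tmono this] obtain k where k: "k \<ge> k0" "t k \<le> m" "m < t (Suc k)" by blast
      define s where "s = m - t k"
      have s: "s \<le> n k" "m = t k + s" using k tS[of k] by (auto simp: s_def)
      have kK: "K \<le> k" and k1': "k \<ge> 1" and kk1: "k \<ge> k1" using k by (auto simp: k0_def)
      have mpos: "real m > 0" using m by (simp add: N_def)
      define a where "a = real m / real (k + 1)"
      define em where "em = \<epsilon> * real m"
      have H1: "S m - S (t K) \<ge> (real m - real (t K)) / 2 - D k"
        using claim2[OF kK s(1)] s(2) by simp
      have H2: "D k \<le> a"
      proof -
        have "D k \<le> real (t k) / real (k + 1)" using Dt[OF k1'] by (simp add: field_simps)
        also have "\<dots> \<le> real m / real (k + 1)" using k(2) by (intro divide_right_mono) auto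
        finally show ?thesis by (simp add: a_def)
      qed
      have H3: "a \<le> em / 2"
      proof -
        have "2 / \<epsilon> < real (k + 1)" using k1 kk1 by simp
        then have "1 / real (k + 1) \<le> \<epsilon> / 2" using e by (simp add: field_simps)
        then have "real m * (1 / real (k + 1)) \<le> real m * (\<epsilon> / 2)"
          using mpos by (intro mult_left_mono) auto
        then show ?thesis by (simp add: a_def em_def mult.commute)
      qed
      have H4: "c \<le> em / 2"
      proof -
        have "real M1 \<le> real m" using m by (simp add: N_def)
        then have "2 * c / \<epsilon> < real m" using M1 by simp
        then show ?thesis using e by (simp add: field_simps em_def)
      qed
      have H5: "- c \<le> S (t K) - real (t K) / 2" unfolding c_def by simp
      from H1 H2 H3 H4 H5 have "S m \<ge> real m / 2 - em" by argo
      then have "S m \<ge> (1/2 - \<epsilon>) * real m" by (simp add: em_def algebra_simps)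
      then show "1/2 - \<epsilon> \<le> (\<Sum>i<m. x i) / real m" using mpos by (simp add: S_def pos_le_divide_eq)
    qed
  qed
qed


lemma psum_meas[measurable]: "(\<lambda>r. psum B w r n) \<in> borel_measurable seq_space"
  unfolding psum_def by measurable

lemma psum_cong_run: "(\<And>i. i \<le> n \<Longrightarrow> r i = r' i) \<Longrightarrow> s \<le> n \<Longrightarrow> psum B v r s = psum B v r' s"
  unfolding psum_def weight_seq_def by (intro sum.cong) auto

lemma psum_cong_word: "(\<And>i. i < n \<Longrightarrow> v i = v' i) \<Longrightarrow> s \<le> n \<Longrightarrow> psum B v r s = psum B v' r s"
  unfolding psum_def weight_seq_def by (intro sum.cong) auto

lemma psum_shift: "psum B v r (t + s) - psum B v r t = psum B (\<lambda>i. v (t + i)) (\<lambda>i. r (t + i)) s"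
proof (induction s)
  case 0 then show ?case by (simp add: psum_def)
next
  case (Suc s)
  have "psum B v r (t + Suc s) = psum B v r (t + s) + weight_seq B v r (t + s)"
    by (simp add: psum_def)
  moreover have "psum B (\<lambda>i. v (t + i)) (\<lambda>i. r (t + i)) (Suc s) =
      psum B (\<lambda>i. v (t + i)) (\<lambda>i. r (t + i)) s + weight_seq B v r (t + s)"
    by (simp add: psum_def weight_seq_def)
  ultimately show ?case using Suc by simp
qed

lemma ws_startat[simp]: "weight_seq (startat B q) = weight_seq B"
  by (simp add: weight_seq_def[abs_def])

lemma path_in_states:
  assumes wf: "wf_pwa \<Sigma> B" and w: "w \<in> words \<Sigma>" and xs: "xs \<in> set_pmf (rpath B w n)"
  shows "\<forall>i\<le>n. xs ! i \<in> pstates B"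
proof (intro allI impI)
  fix i assume "i \<le> n"
  then show "xs ! i \<in> pstates B"
  proof (induction i)
    case 0 then show ?case using path_support[OF xs] wf by (auto simp: wf_pwa_def)
  next
    case (Suc i)
    then have "xs ! i \<in> pstates B" by simp
    moreover have "xs ! Suc i \<in> set_pmf (ptrans B (xs ! i) (w i))" using path_support[OF xs] Suc.prems by auto
    moreover have "set_pmf (ptrans B (xs ! i) (w i)) \<subseteq> pstates B"
      using wf w \<open>xs ! i \<in> pstates B\<close> unfolding wf_pwa_def words_def by blast
    ultimately show ?case by blast
  qed
qed

lemma state_pos_in:
  assumes wf: "wf_pwa \<Sigma> B" and w: "w \<in> words \<Sigma>" and p: "0 < measure (run_measure B w) {r. r t = q}"
  shows "q \<in> pstates B"
proof -
  have "measure (run_measure B w) {r. r t = q} = measure_pmf.prob (rpath B w t) {xs. xs ! t = q}"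
    by (rule RM_fh) auto
  with p have "set_pmf (rpath B w t) \<inter> {xs. xs ! t = q} \<noteq> {}"
    by (auto simp: measure_pmf_zero_iff[symmetric])
  then obtain xs where "xs \<in> set_pmf (rpath B w t)" "xs ! t = q" by auto
  then show ?thesis using path_in_states[OF wf w] by auto
qed

lemma AE_states:
  assumes wf: "wf_pwa \<Sigma> B" and w: "w \<in> words \<Sigma>"
  shows "AE r in run_measure B w. \<forall>i. r i \<in> pstates B"
proof -
  interpret prob_space "run_measure B w" by (rule RM_prob)
  define Bad :: "nat \<Rightarrow> (nat \<Rightarrow> nat) set" where "Bad n = {r. \<not> (\<forall>i\<le>n. r i \<in> pstates B)}" for n
  have inv: "\<And>r r'. (\<And>i. i \<le> n \<Longrightarrow> r i = r' i) \<Longrightarrow> (\<not> (\<forall>i\<le>n. r i \<in> pstates B)) = (\<not> (\<forall>i\<le>n. r' i \<in> pstates B))" for n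
    by auto
  have Bs: "Bad n \<in> sets (run_measure B w)" for n
    unfolding Bad_def RM_sets by (rule fh_sets) (rule inv)
  have B0: "measure (run_measure B w) (Bad n) = 0" for n
  proof -
    have "measure (run_measure B w) (Bad n) = measure_pmf.prob (rpath B w n) {xs. \<not> (\<forall>i\<le>n. xs ! i \<in> pstates B)}"
      unfolding Bad_def by (rule RM_fh) (rule inv)
    also have "\<dots> = 0"
    proof -
      have "set_pmf (rpath B w n) \<inter> {xs. \<not> (\<forall>i\<le>n. xs ! i \<in> pstates B)} = {}"
        using path_in_states[OF wf w] by blast
      then show ?thesis by (simp only: measure_pmf_zero_iff)
    qed
    finally show ?thesis .
  qed
  have nul: "(\<Union>n. Bad n) \<in> null_sets (run_measure B w)"
    using Bs B0 by (intro null_sets_UN) (auto simp: emeasure_eq_measure)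
  moreover have "{r \<in> space (run_measure B w). \<not> (\<forall>i. r i \<in> pstates B)} \<subseteq> (\<Union>n. Bad n)"
    by (auto simp: Bad_def)
  ultimately show ?thesis by (intro AE_I[where N="\<Union>n. Bad n"]) (auto simp: null_sets_def)
qed

lemma sum_abs_bound: "(s::nat) < K \<Longrightarrow> - (\<Sum>s'<K. \<bar>f s'\<bar>) \<le> (f s :: real)"
proof -
  assume "s < K"
  then have "\<bar>f s\<bar> \<le> (\<Sum>s'<K. \<bar>f s'\<bar>)" by (intro member_le_sum) auto
  then show ?thesis by linarith
qed

lemma ev_lower_bound:
  assumes "ereal (3/4) \<le> LimAvg (weight_seq B v r)"
  shows "\<exists>C::nat. \<forall>s. real s / 2 - real C \<le> psum B v r (t + s) - psum B v r t"
proof -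
  have a: "ereal (3/4) \<le> liminf (\<lambda>n. ereal (avg B v r n))" using assms by (simp add: LimAvg_avg)
  have "ereal (5/8) < ereal (3/4)" by simp
  then have "ereal (5/8) < liminf (\<lambda>n. ereal (avg B v r n))" using a by (rule less_le_trans)
  from liminf_gt_ev[OF this] obtain K where K: "\<forall>m\<ge>K. 5/8 < avg B v r m" by auto
  define K' where "K' = max K 1"
  define f where "f s = psum B v r (t + s) - psum B v r t - real s / 2" for s
  define C :: nat where "C = nat \<lceil>\<bar>psum B v r t\<bar> + (\<Sum>s'<K'. \<bar>f s'\<bar>)\<rceil>"
  have Cge: "\<bar>psum B v r t\<bar> + (\<Sum>s'<K'. \<bar>f s'\<bar>) \<le> real C"
    unfolding C_def by linarith
  have "- real C \<le> f s" for s
  proof (cases "s < K'")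
    case True
    then show ?thesis using sum_abs_bound[OF True, of f] Cge by linarith
  next
    case False
    then have m: "t + s \<ge> K" "t + s \<ge> 1" by (auto simp: K'_def)
    have "5/8 < avg B v r (t + s)" using K m(1) by blast
    then have "5/8 < psum B v r (t + s) / real (t + s)" by (simp add: avg_def)
    then have "5/8 * real (t + s) < psum B v r (t + s)" using m(2) by (simp add: field_simps)
    then have "real s / 2 \<le> psum B v r (t + s)" by simp
    then have "- \<bar>psum B v r t\<bar> \<le> f s" unfolding f_def by linarith
    moreover have "0 \<le> (\<Sum>s'<K'. \<bar>f s'\<bar>)" by (intro sum_nonneg) auto
    ultimately show ?thesis using Cge by linarith
  qed
  then show ?thesis unfolding f_def by (intro exI[of _ C]) (auto simp: algebra_simps)
qed


definition badset :: "nat pwa \<Rightarrow> nat \<Rightarrow> nat \<Rightarrow> (nat \<Rightarrow> nat) set" where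
  "badset B C n = {r. \<exists>s\<le>n. psum B (\<lambda>_. 0) r s < real s / 2 - real C}"

lemma badset_inv: fixes B :: "nat pwa" shows "(\<And>i. i \<le> n \<Longrightarrow> r i = r' i) \<Longrightarrow>
   (\<exists>s\<le>n. psum B (\<lambda>_. 0) r s < real s / 2 - real C) = (\<exists>s\<le>n. psum B (\<lambda>_. 0) r' s < real s / 2 - real C)"
  using psum_cong_run[of n r r' _ B "\<lambda>_. 0::nat"] by auto

lemma badset_mono: "C \<le> C' \<Longrightarrow> badset B C' n \<subseteq> badset B C n"
  unfolding badset_def by force

lemma perstate:
  fixes B :: "nat pwa"
  assumes fam: "measure (run_measure B v) {r. ereal (3/4) \<le> LimAvg (weight_seq B v r)} = 1"
    and v0: "\<forall>i\<ge>t. v i = 0" and p: "0 < measure (run_measure B v) {r. r t = q}" and d: "\<delta> > 0"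
  shows "\<exists>C::nat. \<forall>n. measure (run_measure (startat B q) (\<lambda>_. 0)) (badset B C n) \<le> \<delta>"
proof -
  interpret prob_space "run_measure B v" by (rule RM_prob)
  let ?p = "measure (run_measure B v) {r. r t = q}"
  define U :: "nat \<Rightarrow> (nat \<Rightarrow> nat) set" where "U C = {r. \<forall>s. real s / 2 - real C \<le> psum B v r (t + s) - psum B v r t}" for C
  have Us: "U C \<in> sets (run_measure B v)" for C
  proof -
    have "U C = (\<Inter>s. {r \<in> space seq_space. real s / 2 - real C \<le> psum B v r (t + s) - psum B v r t})"
      by (auto simp: U_def)
    also have "\<dots> \<in> sets seq_space" by measurable
    finally show ?thesis by simp
  qed
  have inc: "incseq U"
  proof (rule incseq_SucI, rule subsetI)
    fix C r assume "r \<in> U C"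
    then have h: "real s / 2 - real C \<le> psum B v r (t + s) - psum B v r t" for s by (simp add: U_def)
    have "real s / 2 - real (Suc C) \<le> psum B v r (t + s) - psum B v r t" for s using h[of s] by simp
    then show "r \<in> U (Suc C)" by (simp add: U_def)
  qed
  have AEU: "AE r in run_measure B v. r \<in> (\<Union>C. U C)"
  proof -
    have "AE r in run_measure B v. r \<in> {r. ereal (3/4) \<le> LimAvg (weight_seq B v r)}"
      using fam by (subst (asm) prob_eq_1) (auto simp: LimAvg_set_sets)
    then show ?thesis
    proof eventually_elim
      case (elim r)
      then obtain C where "\<forall>s. real s / 2 - real C \<le> psum B v r (t + s) - psum B v r t"
        using ev_lower_bound[of B v r t] by auto
      then show ?case by (auto simp: U_def)
    qed
  qed
  have m1: "measure (run_measure B v) (\<Union>C. U C) = 1"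
    using AEU Us by (subst prob_eq_1) auto
  have lim: "(\<lambda>C. measure (run_measure B v) (U C)) \<longlonglongrightarrow> 1"
    using Lim_measure_incseq[of U "run_measure B v"] Us inc m1 by auto
  have "1 - ?p * \<delta> < 1" using p d by simp
  from order_tendstoD(1)[OF lim this] obtain C where C: "1 - ?p * \<delta> < measure (run_measure B v) (U C)"
    by (auto simp: eventually_sequentially)
  have "measure (run_measure (startat B q) (\<lambda>_. 0)) (badset B C n) \<le> \<delta>" for n
  proof -
    let ?\<Phi> = "\<lambda>r. \<exists>s\<le>n. psum B (\<lambda>_. 0) r s < real s / 2 - real C"
    have veq: "(\<lambda>i. v (t + i)) = (\<lambda>_. 0)" using v0 by auto
    have key: "psum B v r (t + s) - psum B v r t = psum B (\<lambda>_. 0) (\<lambda>i. r (t + i)) s" for r s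
      using psum_shift[of B v r t s] veq by simp
    have "measure (run_measure B v) {r. r t = q \<and> ?\<Phi> (\<lambda>i. r (t + i))} =
       ?p * measure (run_measure (startat B q) (\<lambda>i. v (t + i))) {r. ?\<Phi> r}"
      by (rule markov_eq) (rule badset_inv)
    then have eq: "measure (run_measure B v) {r. r t = q \<and> ?\<Phi> (\<lambda>i. r (t + i))} =
       ?p * measure (run_measure (startat B q) (\<lambda>_. 0)) (badset B C n)"
      by (simp add: veq badset_def)
    have Es: "{r. r t = q \<and> ?\<Phi> (\<lambda>i. r (t + i))} \<in> sets (run_measure B v)"
    proof -
      have "{r. r t = q \<and> ?\<Phi> (\<lambda>i. r (t + i))} = {r \<in> space seq_space. r t = q \<and> (\<exists>s\<le>n. psum B v r (t + s) - psum B v r t < real s / 2 - real C)}"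
        by (simp only: key space_seq) simp
      also have "\<dots> \<in> sets seq_space" by measurable
      finally show ?thesis by simp
    qed
    have sub: "{r. r t = q \<and> ?\<Phi> (\<lambda>i. r (t + i))} \<subseteq> space (run_measure B v) - U C"
    proof
      fix r assume "r \<in> {r. r t = q \<and> ?\<Phi> (\<lambda>i. r (t + i))}"
      then obtain s where "psum B (\<lambda>_. 0) (\<lambda>i. r (t + i)) s < real s / 2 - real C" by auto
      then have "psum B v r (t + s) - psum B v r t < real s / 2 - real C" by (simp only: key)
      then have "r \<notin> U C" unfolding U_def by (auto simp: not_le)
      then show "r \<in> space (run_measure B v) - U C" by simp
    qed
    have "measure (run_measure B v) {r. r t = q \<and> ?\<Phi> (\<lambda>i. r (t + i))} \<le> measure (run_measure B v) (space (run_measure B v) - U C)"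
      using sub sets.compl_sets[OF Us] by (intro finite_measure_mono) auto
    also have "\<dots> = 1 - measure (run_measure B v) (U C)" using prob_compl[OF Us] by simp
    also have "\<dots> < ?p * \<delta>" using C by simp
    finally have "?p * measure (run_measure (startat B q) (\<lambda>_. 0)) (badset B C n) < ?p * \<delta>" using eq by simp
    then show ?thesis using p by simp
  qed
  then show ?thesis by blast
qed


theorem as_case: "\<not> (\<exists>B. wf_pwa {0,1} B \<and> (\<forall>w\<in>words {0,1}. L_as B w = 1 - L_as A1 w))"
proof
  assume "\<exists>B. wf_pwa {0,1} B \<and> (\<forall>w\<in>words {0,1}. L_as B w = 1 - L_as A1 w)"
  then obtain B :: "nat pwa" where wfB: "wf_pwa {0,1} B" and H: "\<And>w. w \<in> words {0,1} \<Longrightarrow> L_as B w = 1 - L_as A1 w"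
    by blast
  have fam: "measure (run_measure B v) {r. ereal (3/4) \<le> LimAvg (weight_seq B v r)} = 1"
    if v: "v \<in> words {0,1}" "\<forall>i\<ge>m. v i = 0" for v m
  proof -
    have "L_as A1 v = 0" using v(2) by (intro L_A1_fin[of m]) auto
    then have "L_as B v = 1" using H[OF v(1)] by simp
    then have "ereal (3/4) < L_as B v" by (simp add: one_ereal_def)
    then show ?thesis by (rule Las_greater_imp)
  qed
  define R where "R = {q \<in> pstates B. \<exists>v t. v \<in> words {0,1} \<and> (\<forall>i\<ge>t. v i = 0) \<and> 0 < measure (run_measure B v) {r. r t = q}}"
  have finR: "finite R" using wfB by (auto simp: R_def wf_pwa_def)
  define Cq where "Cq \<delta> q = (SOME C::nat. \<forall>n. measure (run_measure (startat B q) (\<lambda>_. 0)) (badset B C n) \<le> \<delta>)" for \<delta> q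
  define CU where "CU \<delta> = Max (insert 0 (Cq \<delta> ` R))" for \<delta>
  have unif: "measure (run_measure (startat B q) (\<lambda>_. 0)) (badset B (CU \<delta>) n) \<le> \<delta>"
    if d: "\<delta> > 0" and q: "q \<in> R" for \<delta> q n
  proof -
    from q obtain v t where v: "v \<in> words {0,1}" "\<forall>i\<ge>t. v i = 0" "0 < measure (run_measure B v) {r. r t = q}"
      by (auto simp: R_def)
    have "\<exists>C::nat. \<forall>n. measure (run_measure (startat B q) (\<lambda>_. 0)) (badset B C n) \<le> \<delta>"
      by (rule perstate[OF fam[OF v(1,2)] v(2,3) d])
    then have Cq: "\<forall>n. measure (run_measure (startat B q) (\<lambda>_. 0)) (badset B (Cq \<delta> q) n) \<le> \<delta>"
      unfolding Cq_def by (rule someI_ex)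
    have le: "Cq \<delta> q \<le> CU \<delta>" unfolding CU_def using finR q by (intro Max_ge) auto
    interpret prob_space "run_measure (startat B q) (\<lambda>_. 0)" by (rule RM_prob)
    have "measure (run_measure (startat B q) (\<lambda>_. 0)) (badset B (CU \<delta>) n) \<le> measure (run_measure (startat B q) (\<lambda>_. 0)) (badset B (Cq \<delta> q) n)"
    proof (rule finite_measure_mono)
      show "badset B (CU \<delta>) n \<subseteq> badset B (Cq \<delta> q) n" by (rule badset_mono[OF le])
      show "badset B (Cq \<delta> q) n \<in> sets (run_measure (startat B q) (\<lambda>_. 0))"
        unfolding badset_def RM_sets by (rule fh_sets) (rule badset_inv)
    qed
    then show ?thesis using Cq by (meson order.trans)
  qed
  define Wv where "Wv = Max (insert 0 ((\<lambda>(q, \<sigma>, q'). \<bar>real_of_rat (pweight B q \<sigma> q')\<bar>) ` (pstates B \<times> {0::nat,1} \<times> pstates B)))"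
  define WN where "WN = nat \<lceil>Wv\<rceil>"
  have wb: "\<bar>weight_seq B w r i\<bar> \<le> real WN"
    if "r i \<in> pstates B" "r (Suc i) \<in> pstates B" "w i \<in> {0,1}" for w r i
  proof -
    have fin: "finite (pstates B \<times> {0::nat,1} \<times> pstates B)" using wfB by (simp add: wf_pwa_def)
    have "\<bar>weight_seq B w r i\<bar> \<le> Wv"
      unfolding Wv_def weight_seq_def using that fin
      by (intro Max_ge) (auto intro!: image_eqI[of _ _ "(r i, w i, r (Suc i))"])
    also have "\<dots> \<le> real WN" unfolding WN_def by linarith
    finally show ?thesis .
  qed
  define Cs where "Cs k = CU ((1/2::real) ^ k)" for k
  define D where "D k = (\<Sum>j\<le>k. real (Cs j + WN + 1))" for k
  define nn where "nn k = nat \<lceil>real (k + 2) * D (Suc k)\<rceil>" for k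
  have nnD: "real (nn k) \<ge> real (k + 2) * (\<Sum>j\<le>Suc k. real (Cs j + WN + 1))" for k
    unfolding nn_def D_def by linarith
  obtain t where t0: "t 0 = 0" and tS: "\<And>k. t (Suc k) = t k + nn k + 1"
  proof -
    show ?thesis by (rule that[of "rec_nat 0 (\<lambda>k x. x + nn k + 1)"]) simp_all
  qed
  have tmono: "i \<le> j \<Longrightarrow> t i \<le> t j" for i j
    by (induction j rule: dec_induct) (auto simp: tS intro: order.trans)
  define w where "w i = (if \<exists>k. i = t k + nn k then 1 else 0::nat)" for i
  have w01: "w \<in> words {0,1}" by (auto simp: w_def words_def)
  have wblk: "w (t k + i) = 0" if "i < nn k" for k i
  proof -
    have "t k + i \<noteq> t j + nn j" for j
    proof (cases "j < k")
      case True
      then have "t (Suc j) \<le> t k" by (intro tmono) simp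
      then show ?thesis using tS[of j] by simp
    next
      case False
      show ?thesis
      proof (cases "j = k")
        case True then show ?thesis using that by simp
      next
        case False
        with \<open>\<not> j < k\<close> have "Suc k \<le> j" by simp
        then have "t (Suc k) \<le> t j" by (rule tmono)
        then show ?thesis using that tS[of k] by simp
      qed
    qed
    then show ?thesis by (auto simp: w_def)
  qed
  have winf: "\<exists>i\<ge>N. w i = 1" for N
  proof -
    have "t N \<ge> N" by (induction N) (auto simp: t0 tS)
    then show ?thesis by (intro exI[of _ "t N + nn N"]) (auto simp: w_def)
  qed
  have LBw: "L_as B w = 0" using H[OF w01] L_A1_inf[OF winf] by simp
  interpret prob_space "run_measure B w" by (rule RM_prob)
  define nb where "nb k = {r. \<exists>s\<le>nn k. psum B w r (t k + s) - psum B w r (t k) < real s / 2 - real (Cs k)}" for k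
  have nbs: "nb k \<in> sets (run_measure B w)" for k
  proof -
    have "nb k = {r \<in> space seq_space. \<exists>s\<le>nn k. psum B w r (t k + s) - psum B w r (t k) < real s / 2 - real (Cs k)}"
      by (simp add: nb_def)
    also have "\<dots> \<in> sets seq_space" by measurable
    finally show ?thesis by simp
  qed
  have nbm: "measure (run_measure B w) (nb k) \<le> (1/2) ^ k" for k
  proof -
    let ?\<Phi> = "\<lambda>r. \<exists>s\<le>nn k. psum B (\<lambda>_. 0) r s < real s / 2 - real (Cs k)"
    have key: "psum B w r (t k + s) - psum B w r (t k) = psum B (\<lambda>_. 0) (\<lambda>i. r (t k + i)) s" if "s \<le> nn k" for r s
    proof -
      have "psum B w r (t k + s) - psum B w r (t k) = psum B (\<lambda>i. w (t k + i)) (\<lambda>i. r (t k + i)) s"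
        by (rule psum_shift)
      also have "\<dots> = psum B (\<lambda>_. 0) (\<lambda>i. r (t k + i)) s"
        by (rule psum_cong_word[OF _ that]) (simp add: wblk)
      finally show ?thesis .
    qed
    have nbeq: "nb k = {r. ?\<Phi> (\<lambda>i. r (t k + i))}"
      unfolding nb_def using key by auto
    have "measure (run_measure B w) {r. ?\<Phi> (\<lambda>i. r (t k + i))} \<le> (1/2) ^ k"
    proof (rule markov_le)
      show "\<And>r r'. (\<And>i. i \<le> nn k \<Longrightarrow> r i = r' i) \<Longrightarrow> ?\<Phi> r = ?\<Phi> r'" by (rule badset_inv)
      fix q assume qpos: "0 < measure (run_measure B w) {r. r (t k) = q}"
      define v where "v i = (if i < t k then w i else 0)" for i
      have v01: "v \<in> words {0,1}" using w01 by (auto simp: v_def words_def)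
      have "measure (run_measure B v) {r. r (t k) = q} = measure (run_measure B w) {r. r (t k) = q}"
        by (rule RM_word_cong[where N="t k"]) (auto simp: v_def)
      then have "q \<in> R" unfolding R_def using qpos state_pos_in[OF wfB w01 qpos] v01
        by (intro CollectI conjI exI[of _ v] exI[of _ "t k"]) (auto simp: v_def)
      have "measure (run_measure (startat B q) (\<lambda>i. w (t k + i))) {r. ?\<Phi> r} =
          measure (run_measure (startat B q) (\<lambda>_. 0)) {r. ?\<Phi> r}"
      proof (rule RM_word_cong[where N="nn k"])
        show "w (t k + i) = 0" if "i < nn k" for i using wblk[OF that] .
        show "\<And>r r'. (\<And>i. i \<le> nn k \<Longrightarrow> r i = r' i) \<Longrightarrow> ?\<Phi> r = ?\<Phi> r'" by (rule badset_inv)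
      qed
      also have "\<dots> = measure (run_measure (startat B q) (\<lambda>_. 0)) (badset B (Cs k) (nn k))"
        by (simp add: badset_def)
      also have "\<dots> \<le> (1/2) ^ k" unfolding Cs_def by (rule unif[OF _ \<open>q \<in> R\<close>]) simp
      finally show "measure (run_measure (startat B q) (\<lambda>i. w (t k + i))) {r. ?\<Phi> r} \<le> (1/2) ^ k" .
    qed
    then show ?thesis using nbeq by simp
  qed
  have summ: "summable (\<lambda>k. measure (run_measure B w) (nb k))"
    by (rule summable_comparison_test'[where g="\<lambda>k. (1/2::real) ^ k"]) (use nbm in auto)
  have AEg: "AE r in run_measure B w. eventually (\<lambda>k. r \<in> space (run_measure B w) - nb k) sequentially"
    by (rule borel_cantelli_AE1) (use nbs summ in \<open>auto simp: emeasure_eq_measure\<close>)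
  have AEs: "AE r in run_measure B w. \<forall>i. r i \<in> pstates B" by (rule AE_states[OF wfB w01])
  have "AE r in run_measure B w. r \<in> {r. ereal (1/2) \<le> LimAvg (weight_seq B w r)}"
    using AEg AEs
  proof eventually_elim
    case (elim r)
    then obtain K where K: "\<And>k. k \<ge> K \<Longrightarrow> r \<notin> nb k" by (auto simp: eventually_sequentially)
    have "ereal (1/2) \<le> liminf (\<lambda>m. ereal ((\<Sum>i<m. weight_seq B w r i) / real m))"
    proof (rule diag_arith[where t=t and n=nn and C=Cs and WN=WN and K=K])
      show "t (Suc k) = t k + nn k + 1" for k by (rule tS)
      show "real (nn k) \<ge> real (k + 2) * (\<Sum>j\<le>Suc k. real (Cs j + WN + 1))" for k by (rule nnD)
      show "\<bar>weight_seq B w r i\<bar> \<le> real WN" for i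
        using elim(2) w01 by (intro wb) (auto simp: words_def)
      fix k s assume "K \<le> k" "s \<le> nn k"
      then show "real s / 2 - real (Cs k) \<le> (\<Sum>i<t k + s. weight_seq B w r i) - (\<Sum>i<t k. weight_seq B w r i)"
        using K[of k] unfolding nb_def psum_def by (auto simp: not_less)
    qed
    then show ?case by (simp add: LimAvg_def)
  qed
  then have "measure (run_measure B w) {r. ereal (1/2) \<le> LimAvg (weight_seq B w r)} = 1"
    by (subst prob_eq_1) (auto simp: LimAvg_set_sets)
  then have "ereal (1/2) \<le> L_as B w" by (rule Las_ge)
  then show False using LBw by simp
qed


theorem lemma23:
  shows "(\<exists>\<Sigma>::nat set. finite \<Sigma> \<and> (\<exists>A. wf_pwa \<Sigma> A \<and>
            \<not> (\<exists>B. wf_pwa \<Sigma> B \<and> (\<forall>w\<in>words \<Sigma>. L_pos B w = 1 - L_pos A w))))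
       \<and> (\<exists>\<Sigma>::nat set. finite \<Sigma> \<and> (\<exists>A'. wf_pwa \<Sigma> A' \<and>
            \<not> (\<exists>B'. wf_pwa \<Sigma> B' \<and> (\<forall>w\<in>words \<Sigma>. L_as B' w = 1 - L_as A' w))))"
proof (intro conjI)
  show "\<exists>\<Sigma>::nat set. finite \<Sigma> \<and> (\<exists>A. wf_pwa \<Sigma> A \<and>
            \<not> (\<exists>B. wf_pwa \<Sigma> B \<and> (\<forall>w\<in>words \<Sigma>. L_pos B w = 1 - L_pos A w)))"
    using wf_A0 pos_case by (intro exI[of _ "{0,1}"] conjI exI[of _ A0]) auto
  show "\<exists>\<Sigma>::nat set. finite \<Sigma> \<and> (\<exists>A'. wf_pwa \<Sigma> A' \<and>
            \<not> (\<exists>B'. wf_pwa \<Sigma> B' \<and> (\<forall>w\<in>words \<Sigma>. L_as B' w = 1 - L_as A' w)))"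
    using wf_A1 as_case by (intro exI[of _ "{0,1}"] conjI exI[of _ A1]) auto
qed

end
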